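(* Let $n\ge 34$ be an integer and $\lambda$ a positive integer. Then there is no graphical $3$-$\left(\binom{n}{2},5,\lambda\right)$ design.
   Context: For a finite set $X$ and integer $t\ge 0$, $\binom{X}{t}$ denotes the set of $t$-subsets of $X$. A $t$-$(v,k,\lambda)$ design is a pair $(X,\mathcal{B})$ with $|X|=v$ and $\mathcal{B}\subseteq\binom{X}{k}$ (the blocks) such that every $T\in\binom{X}{t}$ is contained in exactly $\lambda$ blocks; it is moreover required that $t\ge 2$, $t<k$, $\mathcal{B}\neq\emptyset$ and $\mathcal{B}\neq\binom{X}{k}$. An automorphism of $(X,\mathcal{B})$ is a bijection $\sigma:X\to X$ with $\sigma(\mathcal{B})=\mathcal{B}$. Let $V$ be a set with $|V|=n$; the symmetric group $\mathrm{Sym}(V)$ acts on $\binom{V}{2}$ (the edge set of the complete graph $K_n$), giving a permutation group $\mathcal{S}_n^{[2]}\le \mathrm{Sym}(\binom{V}{2})$. A $t$-$(v,k,\lambda)$ design $(X,\mathcal{B})$ is graphical if $v=\binom{n}{2}$ and its automorphism group contains a subgroup that is permutation isomorphic to $\mathcal{S}_n^{[2]}$ (equivalently, one may take $X$ to be the edge set of $K_n$ and $\mathcal{B}$ a union of $\mathcal{S}_n^{[2]}$-orbits on $\binom{X}{k}$). *)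

theory Defs
  imports Main
begin

definition subsets_of_card :: "'a set \<Rightarrow> nat \<Rightarrow> 'a set set" where
  "subsets_of_card X t = {S. S \<subseteq> X \<and> card S = t}"

definition is_design :: "'a set \<Rightarrow> 'a set set \<Rightarrow> nat \<Rightarrow> nat \<Rightarrow> nat \<Rightarrow> nat \<Rightarrow> bool" where
  "is_design X B t v k lam \<longleftrightarrow>
     finite X \<and> card X = v \<and>
     B \<subseteq> subsets_of_card X k \<and>
     (\<forall>T \<in> subsets_of_card X t. card {b \<in> B. T \<subseteq> b} = lam) \<and>
     2 \<le> t \<and> t < k \<and> B \<noteq> {} \<and> B \<noteq> subsets_of_card X k"

definition is_automorphism :: "'a set \<Rightarrow> 'a set set \<Rightarrow> ('a \<Rightarrow> 'a) \<Rightarrow> bool" where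
  "is_automorphism X B f \<longleftrightarrow> bij_betw f X X \<and> (\<lambda>b. f ` b) ` B = B"

definition edges :: "'b set \<Rightarrow> 'b set set" where
  "edges V = subsets_of_card V 2"

text \<open>This says exactly that Aut(X,B) contains the subgroup
  phi S_n^[2] phi^{-1}, which is permutation isomorphic to S_n^[2].\<close>
definition graphical_wrt :: "nat \<Rightarrow> 'b set \<Rightarrow> ('b set \<Rightarrow> 'a) \<Rightarrow> 'a set \<Rightarrow> 'a set set \<Rightarrow> bool" where
  "graphical_wrt n V phi X B \<longleftrightarrow>
     finite V \<and> card V = n \<and> card X = n choose 2 \<and> bij_betw phi (edges V) X \<and>
     (\<forall>\<sigma>. bij_betw \<sigma> V V \<longrightarrow>
        is_automorphism X B (\<lambda>x. phi (\<sigma> ` (inv_into (edges V) phi x))))"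

end

theory Submission
  imports Defs "HOL.Binomial_Plus"
begin


definition eset :: "nat \<times> nat \<Rightarrow> nat set" where "eset e = {fst e, snd e}"
definition gr :: "(nat \<times> nat) list \<Rightarrow> nat set set" where "gr l = eset ` set l"
definition img :: "(nat \<Rightarrow> nat) \<Rightarrow> nat set set \<Rightarrow> nat set set" where "img \<pi> g = (\<lambda>e. \<pi> ` e) ` g"
definition pe :: "(nat \<times> nat) \<times> (nat \<times> nat) \<Rightarrow> nat set set" where "pe q = {eset (fst q), eset (snd q)}"
definition EL :: "nat \<Rightarrow> (nat\<times>nat) list" where "EL m = concat (map (\<lambda>b. map (\<lambda>a. (a,b)) [0..<b]) [0..<m])"
fun pairs_of :: "'a list \<Rightarrow> ('a\<times>'a) list" where
  "pairs_of [] = []" | "pairs_of (x#xs) = map (Pair x) xs @ pairs_of xs"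
definition cnd :: "(nat\<times>nat) list \<Rightarrow> nat \<Rightarrow> nat \<Rightarrow> (nat\<times>nat)\<times>(nat\<times>nat) \<Rightarrow> bool" where
 "cnd Tl t k q = (fst q \<notin> set Tl \<and> snd q \<notin> set Tl \<and> list_all (\<lambda>v. v = fst (fst q) \<or> v = snd (fst q) \<or> v = fst (snd q) \<or> v = snd (snd q)) [t..<t+k])"
definition LL where "LL Tl t k = filter (cnd Tl t k) (pairs_of (EL (t+k)))"
definition Qs :: "nat \<Rightarrow> nat set set \<Rightarrow> nat \<Rightarrow> nat set \<Rightarrow> nat set set set" where
  "Qs n T t W = {P. P \<subseteq> edges {0..<n} - T \<and> card P = 2 \<and> \<Union>P - {0..<t} = W}"

lemma set_EL: "set (EL m) = {(a,b). a < b \<and> b < m}"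
  by (auto simp: EL_def)

lemma distinct_EL: "distinct (EL m)"
  unfolding EL_def
  by (induction m) (auto simp: distinct_map inj_on_def)

lemma edges_eq: "edges {0..<m} = eset ` set (EL m)"
proof
  show "edges {0..<m} \<subseteq> eset ` set (EL m)"
  proof
    fix e assume "e \<in> edges {0..<m}"
    then have "e \<subseteq> {0..<m}" "card e = 2" by (auto simp: edges_def subsets_of_card_def)
    then obtain a b where ab: "e = {a,b}" "a \<noteq> b" by (auto simp: card_Suc_eq numeral_2_eq_2)
    show "e \<in> eset ` set (EL m)"
    proof (cases "a < b")
      case True
      then show ?thesis using ab \<open>e \<subseteq> _\<close> by (auto simp: set_EL eset_def image_iff intro!: bexI[of _ "(a,b)"])
    next
      case False
      then have "b < a" using ab by auto
      then show ?thesis using ab \<open>e \<subseteq> _\<close> by (auto simp: set_EL eset_def image_iff intro!: bexI[of _ "(b,a)"])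
    qed
  qed
next
  show "eset ` set (EL m) \<subseteq> edges {0..<m}"
    by (auto simp: set_EL eset_def edges_def subsets_of_card_def)
qed

lemma eset_inj: "a < b \<Longrightarrow> c < d \<Longrightarrow> eset (a,b) = eset (c,d) \<Longrightarrow> a = c \<and> b = d"
  by (auto simp: eset_def doubleton_eq_iff)

lemma inj_on_eset: "inj_on eset {(a,b). a < (b::nat)}"
  by (auto simp: inj_on_def dest: eset_inj)

lemma card_eset: "fst e \<noteq> snd e \<Longrightarrow> card (eset e) = 2"
  by (auto simp: eset_def)

lemma pairs_of_set: "set (pairs_of xs) \<subseteq> set xs \<times> set xs"
  by (induction xs) auto

lemma pairs_of_neq: "distinct xs \<Longrightarrow> (x,y) \<in> set (pairs_of xs) \<Longrightarrow> x \<noteq> y"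
  by (induction xs) (auto dest: pairs_of_set[THEN subsetD])

lemma pairs_of_complete: "x \<in> set xs \<Longrightarrow> y \<in> set xs \<Longrightarrow> x \<noteq> y \<Longrightarrow>
   (x,y) \<in> set (pairs_of xs) \<or> (y,x) \<in> set (pairs_of xs)"
  by (induction xs) auto

lemma pairs_of_asym: "distinct xs \<Longrightarrow> (x,y) \<in> set (pairs_of xs) \<Longrightarrow> (y,x) \<notin> set (pairs_of xs)"
  by (induction xs) (auto dest: pairs_of_set[THEN subsetD])

lemma distinct_pairs_of: "distinct xs \<Longrightarrow> distinct (pairs_of xs)"
  by (induction xs) (auto simp: distinct_map inj_on_def dest: pairs_of_set[THEN subsetD])

definition normal :: "(nat\<times>nat) list \<Rightarrow> bool" where
  "normal l = (\<forall>x\<in>set l. fst x < snd x)"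

lemma edges_mono: "A \<subseteq> B \<Longrightarrow> edges A \<subseteq> edges B"
  by (auto simp: edges_def subsets_of_card_def)

lemma eset_in_gr: "normal Tl \<Longrightarrow> fst x < snd x \<Longrightarrow> (eset x \<in> gr Tl) = (x \<in> set Tl)"
  unfolding gr_def normal_def
  by (cases x) (auto dest!: eset_inj[rotated 2] split: prod.splits)

lemma Qs_LL:
  assumes nT: "normal Tl" and tk: "t + k \<le> n"
  shows "Qs n (gr Tl) t {t..<t+k} = pe ` set (LL Tl t k)"
proof
  show "Qs n (gr Tl) t {t..<t+k} \<subseteq> pe ` set (LL Tl t k)"
  proof
    fix P assume "P \<in> Qs n (gr Tl) t {t..<t+k}"
    then have P1: "P \<subseteq> edges {0..<n} - gr Tl" and P2: "card P = 2" and P3: "\<Union>P - {0..<t} = {t..<t+k}"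
      by (auto simp: Qs_def)
    have U: "\<Union>P \<subseteq> {0..<t+k}" using P3 by auto
    have "P \<subseteq> edges {0..<t+k}"
    proof
      fix e assume "e \<in> P"
      then have "e \<in> edges {0..<n}" using P1 by auto
      then show "e \<in> edges {0..<t+k}" using U \<open>e \<in> P\<close> by (auto simp: edges_def subsets_of_card_def)
    qed
    then have Psub: "P \<subseteq> eset ` set (EL (t+k))" using edges_eq by auto
    from P2 obtain e1 e2 where P12: "P = {e1, e2}" "e1 \<noteq> e2" by (auto simp: card_Suc_eq numeral_2_eq_2)
    obtain x where x: "x \<in> set (EL (t+k))" "e1 = eset x" using Psub P12 by auto
    obtain y where y: "y \<in> set (EL (t+k))" "e2 = eset y" using Psub P12 by auto
    have xy: "x \<noteq> y" using x y P12 by auto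
    have nx: "fst x < snd x" "fst y < snd y" using x y by (auto simp: set_EL)
    have xT: "x \<notin> set Tl" using P1 P12 x nx eset_in_gr[OF nT] by auto
    have yT: "y \<notin> set Tl" using P1 P12 y nx eset_in_gr[OF nT] by auto
    have cov: "\<forall>v\<in>{t..<t+k}. v \<in> eset x \<union> eset y" using P3 P12 x y by auto
    have c1: "cnd Tl t k (x,y)" "cnd Tl t k (y,x)" using xT yT cov by (auto simp: cnd_def list_all_iff eset_def)
    have "pe (x,y) = P" "pe (y,x) = P" using P12 x y by (auto simp: pe_def)
    then show "P \<in> pe ` set (LL Tl t k)"
      using pairs_of_complete[OF x(1) y(1) xy] c1 by (auto simp: LL_def)
  qed
next
  show "pe ` set (LL Tl t k) \<subseteq> Qs n (gr Tl) t {t..<t+k}"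
  proof
    fix P assume "P \<in> pe ` set (LL Tl t k)"
    then obtain x y where q: "(x,y) \<in> set (pairs_of (EL (t+k)))" "cnd Tl t k (x,y)" "P = pe (x,y)"
      by (auto simp: LL_def)
    have xy: "x \<in> set (EL (t+k))" "y \<in> set (EL (t+k))" "x \<noteq> y"
      using q(1) pairs_of_set pairs_of_neq[OF distinct_EL] by blast+
    have nx: "fst x < snd x" "fst y < snd y" "snd x < t + k" "snd y < t+k" using xy by (auto simp: set_EL)
    have ex: "eset x \<in> edges {0..<n}" "eset y \<in> edges {0..<n}"
      using xy edges_eq edges_mono[of "{0..<t+k}" "{0..<n}"] tk by auto
    have nT1: "eset x \<notin> gr Tl" "eset y \<notin> gr Tl" using q(2) nx eset_in_gr[OF nT] by (auto simp: cnd_def)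
    have neq: "eset x \<noteq> eset y"
    proof
      assume "eset x = eset y"
      then have "fst x = fst y \<and> snd x = snd y" using nx eset_inj[of "fst x" "snd x" "fst y" "snd y"] by simp
      then show False using xy by (simp add: prod_eq_iff)
    qed
    have cov: "\<forall>v\<in>{t..<t+k}. v \<in> eset x \<union> eset y" using q(2) by (auto simp: cnd_def list_all_iff eset_def)
    have "\<Union>P - {0..<t} = {t..<t+k}"
    proof
      show "\<Union>P - {0..<t} \<subseteq> {t..<t+k}" using q(3) nx by (auto simp: pe_def eset_def)
      show "{t..<t+k} \<subseteq> \<Union>P - {0..<t}" using cov q(3) by (auto simp: pe_def)
    qed
    then show "P \<in> Qs n (gr Tl) t {t..<t+k}"
      using q(3) ex nT1 neq by (auto simp: Qs_def pe_def)
  qed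
qed

lemma inj_pe_LL: "inj_on pe (set (LL Tl t k))"
proof (rule inj_onI)
  fix q r assume q: "q \<in> set (LL Tl t k)" and r: "r \<in> set (LL Tl t k)" and e: "pe q = pe r"
  obtain a b where qa: "q = (a,b)" by (cases q)
  obtain c d where rc: "r = (c,d)" by (cases r)
  have ins: "(a,b) \<in> set (pairs_of (EL (t+k)))" "(c,d) \<in> set (pairs_of (EL (t+k)))" using q r qa rc by (auto simp: LL_def)
  have mem: "a \<in> set (EL (t+k))" "b \<in> set (EL (t+k))" "c \<in> set (EL (t+k))" "d \<in> set (EL (t+k))"
    using ins pairs_of_set by blast+
  have inj: "inj_on eset (set (EL (t+k)))" using inj_on_eset by (rule inj_on_subset) (auto simp: set_EL)
  from e have "{eset a, eset b} = {eset c, eset d}" by (simp add: pe_def qa rc)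
  then have "(eset a = eset c \<and> eset b = eset d) \<or> (eset a = eset d \<and> eset b = eset c)"
    by (auto simp: doubleton_eq_iff)
  then have "(a = c \<and> b = d) \<or> (a = d \<and> b = c)" using inj mem by (auto dest: inj_onD)
  then show "q = r" using pairs_of_asym[OF distinct_EL ins(1)] ins(2) qa rc by auto
qed

lemma distinct_LL: "distinct (LL Tl t k)"
  by (simp add: LL_def distinct_pairs_of distinct_EL)

lemma card_filter_LL:
  assumes "normal Tl" "t + k \<le> n"
  shows "card {P \<in> Qs n (gr Tl) t {t..<t+k}. gr Tl \<union> P \<in> F} = length (filter (\<lambda>q. gr Tl \<union> pe q \<in> F) (LL Tl t k))"
proof -
  have "{P \<in> Qs n (gr Tl) t {t..<t+k}. gr Tl \<union> P \<in> F} = pe ` set (filter (\<lambda>q. gr Tl \<union> pe q \<in> F) (LL Tl t k))"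
    using Qs_LL[OF assms] by auto
  moreover have "card (pe ` set (filter (\<lambda>q. gr Tl \<union> pe q \<in> F) (LL Tl t k))) = length (filter (\<lambda>q. gr Tl \<union> pe q \<in> F) (LL Tl t k))"
    proof (subst card_image)
    show "inj_on pe (set (filter (\<lambda>q. gr Tl \<union> pe q \<in> F) (LL Tl t k)))"
      by (rule inj_on_subset[OF inj_pe_LL]) auto
  qed (metis distinct_card distinct_filter distinct_LL)
  ultimately show ?thesis by simp
qed

lemma finite_edges: "finite (edges {0..<(n::nat)})"
  unfolding edges_def subsets_of_card_def
  by (rule finite_subset[of _ "Pow {0..<n}"]) auto

lemma super_count:
  fixes n :: nat
  assumes Fsub: "F \<subseteq> {g. g \<subseteq> edges {0..<n} \<and> card g = 5}"
    and T: "T \<subseteq> edges {0..<n}" "card T = 3"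
  shows "card {g\<in>F. T \<subseteq> g} = card {P. P \<subseteq> edges {0..<n} - T \<and> card P = 2 \<and> T \<union> P \<in> F}"
proof (rule bij_betw_same_card[of "\<lambda>g. g - T"], rule bij_betw_byWitness[where f'="\<lambda>P. T \<union> P"])
  have fT: "finite T" using finite_subset[OF T(1) finite_edges] .
  show "\<forall>a\<in>{g \<in> F. T \<subseteq> g}. T \<union> (a - T) = a" by blast
  show "\<forall>a'\<in>{P. P \<subseteq> edges {0..<n} - T \<and> card P = 2 \<and> T \<union> P \<in> F}. T \<union> a' - T = a'" by blast
  show "(\<lambda>g. g - T) ` {g \<in> F. T \<subseteq> g} \<subseteq> {P. P \<subseteq> edges {0..<n} - T \<and> card P = 2 \<and> T \<union> P \<in> F}"
  proof
    fix P assume "P \<in> (\<lambda>g. g - T) ` {g \<in> F. T \<subseteq> g}"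
    then obtain g where g: "g \<in> F" "T \<subseteq> g" "P = g - T" by blast
    have gE: "g \<subseteq> edges {0..<n}" and cg: "card g = 5" using g Fsub by blast+
    then have "finite g" using finite_subset[OF _ finite_edges] by blast
    then have "card P = 2" using g(2,3) T(2) cg card_Diff_subset[OF fT g(2)] by simp
    moreover have "T \<union> P = g" using g by blast
    moreover have "P \<subseteq> edges {0..<n} - T" using g gE by blast
    ultimately show "P \<in> {P. P \<subseteq> edges {0..<n} - T \<and> card P = 2 \<and> T \<union> P \<in> F}"
      using g by simp
  qed
  show "(\<union>) T ` {P. P \<subseteq> edges {0..<n} - T \<and> card P = 2 \<and> T \<union> P \<in> F} \<subseteq> {g \<in> F. T \<subseteq> g}"
    by blast
qed

lemma card_Union_pair_le:
  assumes "card P = 2" "\<forall>e\<in>P. card e = 2"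
  shows "card (\<Union>P) \<le> 4"
proof -
  have "card (\<Union>P) \<le> sum card P" by (rule card_Union_le_sum_card)
  also have "sum card P = 4" using assms by (simp add: sum.cong[of P P card "\<lambda>_. 2"])
  finally show ?thesis .
qed

lemma partition_count:
  assumes T: "T \<subseteq> edges {0..<n}"
  shows "card {P. P \<subseteq> edges {0..<n} - T \<and> card P = 2 \<and> T \<union> P \<in> F}
     = (\<Sum>W\<in>{W. W \<subseteq> {t..<n} \<and> card W \<le> 4}. card {P \<in> Qs n T t W. T \<union> P \<in> F})"
proof -
  let ?Ws = "{W. W \<subseteq> {t..<n} \<and> card W \<le> 4}"
  have eq: "{P. P \<subseteq> edges {0..<n} - T \<and> card P = 2 \<and> T \<union> P \<in> F} = (\<Union>W\<in>?Ws. {P \<in> Qs n T t W. T \<union> P \<in> F})"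
  proof
    show "{P. P \<subseteq> edges {0..<n} - T \<and> card P = 2 \<and> T \<union> P \<in> F} \<subseteq> (\<Union>W\<in>?Ws. {P \<in> Qs n T t W. T \<union> P \<in> F})"
    proof
      fix P assume P: "P \<in> {P. P \<subseteq> edges {0..<n} - T \<and> card P = 2 \<and> T \<union> P \<in> F}"
      have "\<forall>e\<in>P. card e = 2" "\<forall>e\<in>P. e \<subseteq> {0..<n}" using P by (auto simp: edges_def subsets_of_card_def)
      then have c4: "card (\<Union>P) \<le> 4" using P card_Union_pair_le by auto
      have fin: "finite (\<Union>P)" using \<open>\<forall>e\<in>P. e \<subseteq> {0..<n}\<close> by (meson Union_least finite_atLeastLessThan finite_subset)
      have "card (\<Union>P - {0..<t}) \<le> 4" using c4 card_mono[OF fin, of "\<Union>P - {0..<t}"] by auto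
      moreover have "\<Union>P - {0..<t} \<subseteq> {t..<n}"
      proof
        fix x assume x: "x \<in> \<Union>P - {0..<t}"
        then obtain e where "e \<in> P" "x \<in> e" by auto
        then have "x < n" using \<open>\<forall>e\<in>P. e \<subseteq> {0..<n}\<close> by (meson atLeastLessThan_iff subsetD)
        then show "x \<in> {t..<n}" using x by auto
      qed
      ultimately show "P \<in> (\<Union>W\<in>?Ws. {P \<in> Qs n T t W. T \<union> P \<in> F})"
        using P by (auto simp: Qs_def)
    qed
    show "(\<Union>W\<in>?Ws. {P \<in> Qs n T t W. T \<union> P \<in> F}) \<subseteq> {P. P \<subseteq> edges {0..<n} - T \<and> card P = 2 \<and> T \<union> P \<in> F}"
      by (auto simp: Qs_def)
  qed
  have finQ: "finite {P \<in> Qs n T t W. T \<union> P \<in> F}" for W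
    by (rule finite_subset[of _ "Pow (edges {0..<n})"]) (auto simp: Qs_def finite_edges)
  show ?thesis unfolding eq
  proof (rule card_UN_disjoint)
    show "finite ?Ws" by (rule finite_subset[of _ "Pow {t..<n}"]) auto
    show "\<forall>W\<in>?Ws. finite {P \<in> Qs n T t W. T \<union> P \<in> F}" using finQ by blast
    show "\<forall>W\<in>?Ws. \<forall>W'\<in>?Ws. W \<noteq> W' \<longrightarrow> {P \<in> Qs n T t W. T \<union> P \<in> F} \<inter> {P \<in> Qs n T t W'. T \<union> P \<in> F} = {}"
      unfolding Qs_def by blast
  qed
qed

lemma img_Un: "img \<sigma> (A \<union> B) = img \<sigma> A \<union> img \<sigma> B" by (auto simp: img_def)

lemma shift_le:
  assumes Finv: "\<forall>\<pi>. bij_betw \<pi> {0..<n} {0..<n} \<longrightarrow> (\<forall>g. g \<subseteq> edges {0..<n} \<longrightarrow> (img \<pi> g \<in> F \<longleftrightarrow> g \<in> F))"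
    and \<sigma>: "bij_betw \<sigma> {0..<n} {0..<n}" and fx: "\<forall>x<t. \<sigma> x = x"
    and T: "T \<subseteq> edges {0..<t}" and tn: "t \<le> n"
  shows "card {P \<in> Qs n T t W. T \<union> P \<in> F} \<le> card {P \<in> Qs n T t (\<sigma> ` W). T \<union> P \<in> F}"
proof (rule card_inj_on_le[of "img \<sigma>"])
  have injs: "inj_on \<sigma> {0..<n}" using \<sigma> by (auto simp: bij_betw_def)
  have inje: "inj_on (image \<sigma>) (edges {0..<n})"
    by (rule inj_on_subset[OF inj_on_image_Pow[OF injs]]) (auto simp: edges_def subsets_of_card_def)
  have injP: "inj_on (img \<sigma>) (Pow (edges {0..<n}))"
    unfolding img_def by (rule inj_on_image_Pow[OF inje])
  have TE: "T \<subseteq> edges {0..<n}" using T edges_mono[of "{0..<t}" "{0..<n}"] tn by auto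
  have imgT: "img \<sigma> T = T"
  proof -
    have "\<sigma> ` e = e" if "e \<in> T" for e
    proof -
      have "e \<subseteq> {0..<t}" using that T by (auto simp: edges_def subsets_of_card_def)
      then show ?thesis using fx by force
    qed
    then show ?thesis by (force simp: img_def)
  qed
  show "inj_on (img \<sigma>) {P \<in> Qs n T t W. T \<union> P \<in> F}"
    by (rule inj_on_subset[OF injP]) (auto simp: Qs_def)
  show "finite {P \<in> Qs n T t (\<sigma> ` W). T \<union> P \<in> F}"
    by (rule finite_subset[of _ "Pow (edges {0..<n})"]) (auto simp: Qs_def finite_edges)
  show "img \<sigma> ` {P \<in> Qs n T t W. T \<union> P \<in> F} \<subseteq> {P \<in> Qs n T t (\<sigma> ` W). T \<union> P \<in> F}"
  proof
    fix Q assume "Q \<in> img \<sigma> ` {P \<in> Qs n T t W. T \<union> P \<in> F}"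
    then obtain P where P: "P \<subseteq> edges {0..<n} - T" "card P = 2" "\<Union>P - {0..<t} = W" "T \<union> P \<in> F" "Q = img \<sigma> P"
      by (auto simp: Qs_def)
    have PE: "P \<subseteq> edges {0..<n}" using P by auto
    have QE: "Q \<subseteq> edges {0..<n}"
    proof
      fix e' assume "e' \<in> Q"
      then obtain e where e: "e \<in> P" "e' = \<sigma> ` e" using P by (auto simp: img_def)
      then have "e \<subseteq> {0..<n}" "card e = 2" using PE by (auto simp: edges_def subsets_of_card_def)
      moreover have "inj_on \<sigma> e" using injs \<open>e \<subseteq> {0..<n}\<close> inj_on_subset by blast
      moreover have "\<sigma> ` e \<subseteq> {0..<n}" using \<sigma> \<open>e \<subseteq> {0..<n}\<close> by (auto simp: bij_betw_def)
      ultimately show "e' \<in> edges {0..<n}" using e by (simp add: edges_def subsets_of_card_def card_image)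
    qed
    have QT: "Q \<inter> T = {}"
    proof (rule ccontr)
      assume "Q \<inter> T \<noteq> {}"
      then obtain e where e: "e \<in> P" "\<sigma> ` e \<in> T" using P by (auto simp: img_def)
      have "\<sigma> ` e \<in> img \<sigma> T" using imgT e by simp
      then obtain e0 where e0: "e0 \<in> T" "\<sigma> ` e0 = \<sigma> ` e" by (auto simp: img_def)
      have "e0 = e" using inj_onD[OF inje e0(2)] e0(1) TE e PE by auto
      then show False using e e0 P by auto
    qed
    have cQ: "card Q = 2" using P card_image[OF inj_on_subset[OF inje PE]] by (simp add: img_def)
    have UQ: "\<Union>Q = \<sigma> ` \<Union>P" using P by (auto simp: img_def)
    have UP: "\<Union>P \<subseteq> {0..<n}" using PE by (auto simp: edges_def subsets_of_card_def)
    have "\<Union>Q - {0..<t} = \<sigma> ` W"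
    proof
      show "\<Union>Q - {0..<t} \<subseteq> \<sigma> ` W"
      proof
        fix y assume y: "y \<in> \<Union>Q - {0..<t}"
        then obtain x where x: "x \<in> \<Union>P" "y = \<sigma> x" using UQ by auto
        have "x \<notin> {0..<t}" using x y fx by auto
        then show "y \<in> \<sigma> ` W" using x P by auto
      qed
      show "\<sigma> ` W \<subseteq> \<Union>Q - {0..<t}"
      proof
        fix y assume "y \<in> \<sigma> ` W"
        then obtain x where "x \<in> W" "y = \<sigma> x" by auto
        then have x: "x \<in> \<Union>P" "x \<ge> t" "y = \<sigma> x" using P(3) by auto
        have "y \<ge> t"
        proof (rule ccontr)
          assume "\<not> t \<le> y"
          then have "\<sigma> y = y" using fx by auto
          then have "\<sigma> y = \<sigma> x" using x by simp
          moreover have "y < n" using \<open>\<not> t \<le> y\<close> tn by auto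
          ultimately have "y = x" using inj_onD[OF injs] x UP by auto
          then show False using x \<open>\<not> t \<le> y\<close> by auto
        qed
        then show "y \<in> \<Union>Q - {0..<t}" using x UQ by auto
      qed
    qed
    moreover have "T \<union> Q \<in> F"
    proof -
      have TPE: "T \<union> P \<subseteq> edges {0..<n}" using PE TE by blast
      have "img \<sigma> (T \<union> P) \<in> F \<longleftrightarrow> T \<union> P \<in> F" using Finv \<sigma> TPE by blast
      then have "img \<sigma> (T \<union> P) \<in> F" using P(4) by blast
      moreover have "img \<sigma> (T \<union> P) = T \<union> Q" using P(5) imgT img_Un by simp
      ultimately show ?thesis by simp
    qed
    ultimately show "Q \<in> {P \<in> Qs n T t (\<sigma> ` W). T \<union> P \<in> F}"
      using QE QT cQ by (auto simp: Qs_def)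
  qed
qed

lemma perm_exists:
  fixes n t :: nat
  assumes A: "A \<subseteq> {t..<n}" and B: "B \<subseteq> {t..<n}" and c: "card A = card B"
  shows "\<exists>\<sigma>. bij_betw \<sigma> {0..<n} {0..<n} \<and> (\<forall>x<t. \<sigma> x = x) \<and> \<sigma> ` A = B"
proof -
  have fA: "finite A" "finite B" using finite_subset[OF A] finite_subset[OF B] by auto
  obtain f where f: "bij_betw f A B" using finite_same_card_bij[OF fA c] by blast
  have c2: "card ({t..<n} - A) = card ({t..<n} - B)" using A B c fA by (simp add: card_Diff_subset)
  obtain g where g: "bij_betw g ({t..<n} - A) ({t..<n} - B)" using finite_same_card_bij[OF _ _ c2] by blast
  define \<sigma> where "\<sigma> x = (if x \<in> A then f x else if x \<in> {t..<n} - A then g x else x)" for x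
  have e1: "\<forall>x\<in>A. \<sigma> x = f x" by (simp add: \<sigma>_def)
  have e2: "\<forall>x\<in>{t..<n} - A. \<sigma> x = g x" unfolding \<sigma>_def by auto
  have e3: "\<forall>x\<in>{0..<min t n}. \<sigma> x = id x"
  proof
    fix x assume x: "x \<in> {0..<min t n}"
    then have h: "x \<notin> A" "x \<notin> {t..<n} - A" using A by auto
    show "\<sigma> x = id x" unfolding \<sigma>_def by (simp only: h if_False id_apply)
  qed
  have b1: "bij_betw \<sigma> A B" using f bij_betw_cong[of A \<sigma> f B] e1 by blast
  have b2: "bij_betw \<sigma> ({t..<n} - A) ({t..<n} - B)" using g bij_betw_cong[of "{t..<n} - A" \<sigma> g] e2 by blast
  have b3: "bij_betw \<sigma> {0..<min t n} {0..<min t n}" using bij_betw_id bij_betw_cong[of "{0..<min t n}" \<sigma> id] e3 by blast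
  have d1: "B \<inter> ({t..<n} - B) = {}" by blast
  have d2: "(B \<union> ({t..<n} - B)) \<inter> {0..<min t n} = {}" using B by auto
  have "bij_betw \<sigma> (A \<union> ({t..<n} - A) \<union> {0..<min t n}) (B \<union> ({t..<n} - B) \<union> {0..<min t n})"
    by (rule bij_betw_combine[OF bij_betw_combine[OF b1 b2 d1] b3 d2])
  moreover have "A \<union> ({t..<n} - A) \<union> {0..<min t n} = {0..<n}" using A by auto
  moreover have "B \<union> ({t..<n} - B) \<union> {0..<min t n} = {0..<n}" using B by auto
  ultimately have "bij_betw \<sigma> {0..<n} {0..<n}" by simp
  moreover have "\<forall>x<t. \<sigma> x = x"
  proof (intro allI impI)
    fix x assume "x < t"
    then have h: "x \<notin> A" "x \<notin> {t..<n} - A" using A by auto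
    show "\<sigma> x = x" unfolding \<sigma>_def by (simp only: h if_False)
  qed
  moreover have "\<sigma> ` A = B" using b1 by (simp add: bij_betw_def)
  ultimately show ?thesis by blast
qed


lemma count_formula:
  fixes n t :: nat
  assumes Fsub: "F \<subseteq> {g. g \<subseteq> edges {0..<n} \<and> card g = 5}"
    and Finv: "\<forall>\<pi>. bij_betw \<pi> {0..<n} {0..<n} \<longrightarrow> (\<forall>g. g \<subseteq> edges {0..<n} \<longrightarrow> (img \<pi> g \<in> F \<longleftrightarrow> g \<in> F))"
    and T: "T \<subseteq> edges {0..<t}" "card T = 3" and tn: "t + 4 \<le> n"
  shows "card {g\<in>F. T \<subseteq> g} = (\<Sum>k\<le>4. (n - t choose k) * card {P \<in> Qs n T t {t..<t+k}. T \<union> P \<in> F})"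
proof -
  let ?c = "\<lambda>W. card {P \<in> Qs n T t W. T \<union> P \<in> F}"
  let ?Ws = "{W. W \<subseteq> {t..<n} \<and> card W \<le> 4}"
  have TE: "T \<subseteq> edges {0..<n}" using T edges_mono[of "{0..<t}" "{0..<n}"] tn by auto
  have "card {g\<in>F. T \<subseteq> g} = (\<Sum>W\<in>?Ws. ?c W)"
    using super_count[OF Fsub TE T(2)] partition_count[OF TE, of F t] by simp
  also have "\<dots> = (\<Sum>W\<in>?Ws. ?c {t..<t + card W})"
  proof (rule sum.cong[OF refl])
    fix W assume W: "W \<in> ?Ws"
    let ?A = "{t..<t + card W}"
    have A: "?A \<subseteq> {t..<n}" "card ?A = card W" using W tn by auto
    obtain s1 where s1: "bij_betw s1 {0..<n} {0..<n}" "\<forall>x<t. s1 x = x" "s1 ` ?A = W"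
      using perm_exists[OF A(1) _ A(2)] W by blast
    obtain s2 where s2: "bij_betw s2 {0..<n} {0..<n}" "\<forall>x<t. s2 x = x" "s2 ` W = ?A"
      using perm_exists[OF _ A(1) A(2)[symmetric]] W by blast
    have "?c ?A \<le> ?c W" using shift_le[OF Finv s1(1,2) T(1), of ?A] tn s1(3) by simp
    moreover have "?c W \<le> ?c ?A" using shift_le[OF Finv s2(1,2) T(1), of W] tn s2(3) by simp
    ultimately show "?c W = ?c ?A" by simp
  qed
  also have "\<dots> = (\<Sum>k\<in>{..4}. \<Sum>W\<in>{W \<in> ?Ws. card W = k}. ?c {t..<t + card W})"
  proof (rule sum.group[symmetric])
    show "finite ?Ws" by (rule finite_subset[of _ "Pow {t..<n}"]) auto
  qed auto
  also have "\<dots> = (\<Sum>k\<in>{..4}. (n - t choose k) * ?c {t..<t+k})"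
  proof (rule sum.cong[OF refl])
    fix k assume k: "k \<in> {..(4::nat)}"
    have eq: "{W \<in> ?Ws. card W = k} = {W. W \<subseteq> {t..<n} \<and> card W = k}" using k by auto
    have "(\<Sum>W\<in>{W \<in> ?Ws. card W = k}. ?c {t..<t + card W}) = (\<Sum>W\<in>{W \<in> ?Ws. card W = k}. ?c {t..<t + k})"
      by (rule sum.cong) auto
    also have "\<dots> = card {W. W \<subseteq> {t..<n} \<and> card W = k} * ?c {t..<t+k}" using eq by simp
    also have "card {W. W \<subseteq> {t..<n} \<and> card W = k} = (n - t choose k)"
      using n_subsets[of "{t..<n}" k] by simp
    finally show "(\<Sum>W\<in>{W \<in> ?Ws. card W = k}. ?c {t..<t + card W}) = (n - t choose k) * ?c {t..<t+k}" .
  qed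
  finally show ?thesis by (simp add: atMost_def)
qed


definition pl :: "nat list \<Rightarrow> nat \<Rightarrow> nat" where "pl p x = (if x < length p then p ! x else x)"
definition nrm :: "nat\<times>nat \<Rightarrow> nat\<times>nat" where "nrm e = (min (fst e) (snd e), max (fst e) (snd e))"
definition seteq :: "'a list \<Rightarrow> 'a list \<Rightarrow> bool" where
  "seteq a b = (list_all (\<lambda>x. x \<in> set b) a \<and> list_all (\<lambda>x. x \<in> set a) b)"
definition wok :: "(nat\<times>nat) list list \<Rightarrow> (nat\<times>nat) list \<Rightarrow> ((nat\<times>nat)\<times>(nat\<times>nat)) \<times> nat \<times> nat list \<Rightarrow> bool" where
 "wok reps Tl w = (case w of (q,i,p) \<Rightarrow> i < length reps \<and> length p = 10 \<and> distinct p \<and> list_all (\<lambda>x. x < 10) p \<and>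
    seteq (map (\<lambda>e. nrm (pl p (fst e), pl p (snd e))) (reps!i)) (map nrm (fst q # snd q # Tl)))"
definition repok :: "(nat\<times>nat) list list \<Rightarrow> bool" where
  "repok reps = list_all (list_all (\<lambda>e. fst e < snd e \<and> snd e < 10)) reps"

lemma pl_bij:
  assumes "length p = 10" "distinct p" "list_all (\<lambda>x. x < 10) p" "10 \<le> n"
  shows "bij_betw (pl p) {0..<n} {0..<n}"
proof -
  have sp: "set p \<subseteq> {0..<10}" using assms(3) by (auto simp: list_all_iff)
  have sp2: "set p = {0..<10}"
    using card_subset_eq[OF _ sp] distinct_card[OF assms(2)] assms(1) by simp
  have inj: "inj_on (pl p) {0..<n}"
  proof (rule inj_onI)
    fix x y assume x: "x \<in> {0..<n}" and y: "y \<in> {0..<n}" and e: "pl p x = pl p y"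
    show "x = y"
    proof (cases "x < 10"; cases "y < 10")
      assume "x < 10" "y < 10"
      then have "p ! x = p ! y" using e assms(1) by (simp add: pl_def)
      then show ?thesis using nth_eq_iff_index_eq[OF assms(2)] \<open>x < 10\<close> \<open>y < 10\<close> assms(1) by simp
    next
      assume "x < 10" "\<not> y < 10"
      then have "p ! x \<in> set p" using assms(1) by auto
      then have "p ! x < 10" using sp by auto
      then show ?thesis using e \<open>x < 10\<close> \<open>\<not> y < 10\<close> assms(1) by (auto simp: pl_def)
    next
      assume "\<not> x < 10" "y < 10"
      then have "p ! y \<in> set p" using assms(1) by auto
      then have "p ! y < 10" using sp by auto
      then show ?thesis using e \<open>\<not> x < 10\<close> \<open>y < 10\<close> assms(1) by (auto simp: pl_def)
    next
      assume "\<not> x < 10" "\<not> y < 10"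
      then show ?thesis using e assms(1) by (auto simp: pl_def)
    qed
  qed
  have sub: "pl p ` {0..<n} \<subseteq> {0..<n}"
  proof
    fix y assume "y \<in> pl p ` {0..<n}"
    then obtain x where x: "x < n" "y = pl p x" by auto
    show "y \<in> {0..<n}"
    proof (cases "x < 10")
      case True
      then have "p ! x \<in> set p" using assms(1) by auto
      then have "p ! x < 10" using sp by auto
      then show ?thesis using x True assms(1,4) by (auto simp: pl_def)
    next
      case False
      then show ?thesis using x assms(1) by (auto simp: pl_def)
    qed
  qed
  have "pl p ` {0..<n} = {0..<n}" by (rule endo_inj_surj[OF _ sub inj]) simp
  then show ?thesis using inj by (simp add: bij_betw_def)
qed

lemma eset_nrm: "eset (nrm e) = eset e"
  by (auto simp: eset_def nrm_def min_def max_def)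

lemma gr_nrm: "gr (map nrm l) = gr l"
  by (auto simp: gr_def eset_nrm image_iff)

lemma img_gr: "img \<pi> (gr l) = gr (map (\<lambda>e. (\<pi> (fst e), \<pi> (snd e))) l)"
  unfolding img_def gr_def by (force simp: eset_def image_iff)

lemma seteqD: "seteq a b \<Longrightarrow> set a = set b"
  by (auto simp: seteq_def list_all_iff)

lemma gr_cons2: "gr (a # b # l) = pe (a,b) \<union> gr l"
  by (auto simp: gr_def pe_def)

lemma witness_iff:
  assumes Finv: "\<forall>\<pi>. bij_betw \<pi> {0..<n} {0..<n} \<longrightarrow> (\<forall>g. g \<subseteq> edges {0..<n} \<longrightarrow> (img \<pi> g \<in> F \<longleftrightarrow> g \<in> F))"
    and n: "10 \<le> n" and R: "repok reps" and w: "wok reps Tl (q,i,p)"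
  shows "(gr Tl \<union> pe q \<in> F) = (gr (reps!i) \<in> F)"
proof -
  have wi: "i < length reps" "length p = 10" "distinct p" "list_all (\<lambda>x. x < 10) p"
    and se: "seteq (map (\<lambda>e. nrm (pl p (fst e), pl p (snd e))) (reps!i)) (map nrm (fst q # snd q # Tl))"
    using w by (auto simp: wok_def)
  have b: "bij_betw (pl p) {0..<n} {0..<n}" using pl_bij[OF wi(2-4) n] .
  have ri: "list_all (\<lambda>e. fst e < snd e \<and> snd e < 10) (reps!i)" using R wi(1) by (auto simp: repok_def list_all_iff)
  have sub: "gr (reps!i) \<subseteq> edges {0..<n}"
    using ri n by (auto simp: gr_def eset_def edges_def subsets_of_card_def list_all_iff)
  have "img (pl p) (gr (reps!i)) = gr (map (\<lambda>e. (pl p (fst e), pl p (snd e))) (reps!i))" by (rule img_gr)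
  also have "\<dots> = gr (map nrm (map (\<lambda>e. (pl p (fst e), pl p (snd e))) (reps!i)))" by (rule gr_nrm[symmetric])
  also have "\<dots> = gr (map nrm (fst q # snd q # Tl))"
    using seteqD[OF se] by (simp add: gr_def o_def)
  also have "\<dots> = gr (fst q # snd q # Tl)" by (rule gr_nrm)
  also have "\<dots> = gr Tl \<union> pe q" by (simp add: gr_cons2 Un_commute)
  finally have "img (pl p) (gr (reps!i)) = gr Tl \<union> pe q" .
  then show ?thesis using Finv b sub by metis
qed

lemma witness_count:
  assumes Finv: "\<forall>\<pi>. bij_betw \<pi> {0..<n} {0..<n} \<longrightarrow> (\<forall>g. g \<subseteq> edges {0..<n} \<longrightarrow> (img \<pi> g \<in> F \<longleftrightarrow> g \<in> F))"
    and n: "10 \<le> n" and R: "repok reps" and W: "list_all (wok reps Tl) W"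
  shows "length (filter (\<lambda>q. gr Tl \<union> pe q \<in> F) (map fst W)) = length (filter (\<lambda>w. gr (reps ! fst (snd w)) \<in> F) W)"
  using W
proof (induction W)
  case (Cons w W)
  obtain q i p where w: "w = (q,i,p)" by (cases w) auto
  have "wok reps Tl (q,i,p)" using Cons.prems w by simp
  then have "(gr Tl \<union> pe q \<in> F) = (gr (reps!i) \<in> F)" by (rule witness_iff[OF Finv n R])
  then show ?case using Cons w by auto
qed simp

lemma filter_count:
  assumes "\<forall>w\<in>set W. idx w < (N::nat)"
  shows "int (length (filter (\<lambda>w. X (idx w)) W)) = (\<Sum>i<N. int (count_list (map idx W) i) * of_bool (X i))"
  using assms
proof (induction W)
  case Nil
  then show ?case by simp
next
  case (Cons w W)
  have "(\<Sum>i<N. int (count_list (map idx (w#W)) i) * of_bool (X i))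
      = (\<Sum>i<N. int (count_list (map idx W) i) * of_bool (X i)) + (\<Sum>i<N. (if i = idx w then of_bool (X i) else 0))"
  proof -
    have "\<And>i. int (count_list (map idx (w#W)) i) * of_bool (X i)
        = int (count_list (map idx W) i) * of_bool (X i) + (if i = idx w then of_bool (X i) else 0)"
      by (auto simp: algebra_simps)
    then show ?thesis by (simp add: sum.distrib)
  qed
  also have "(\<Sum>i<N. (if i = idx w then of_bool (X i) else 0)) = (of_bool (X (idx w)) :: int)"
    using Cons.prems by (simp add: sum.delta)
  finally show ?case using Cons by simp
qed

fun hv :: "int list \<Rightarrow> int \<Rightarrow> int" where
  "hv [] m = 0" | "hv (c#cs) m = c + m * hv cs m"

fun vadd :: "int list \<Rightarrow> int list \<Rightarrow> int list" where
  "vadd [] ys = ys" | "vadd xs [] = xs" | "vadd (x#xs) (y#ys) = (x+y) # vadd xs ys"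

lemma hv_vadd: "hv (vadd xs ys) m = hv xs m + hv ys m"
  by (induction xs ys rule: vadd.induct) (auto simp: algebra_simps)

definition nonneg :: "int list \<Rightarrow> bool" where "nonneg v = list_all (\<lambda>c. c \<ge> 0) v"
definition nonpos :: "int list \<Rightarrow> bool" where "nonpos v = list_all (\<lambda>c. c \<le> 0) v"
definition spos :: "int list \<Rightarrow> bool" where "spos v = (case v of [] \<Rightarrow> False | c#cs \<Rightarrow> c > 0 \<and> nonneg cs)"
definition sneg :: "int list \<Rightarrow> bool" where "sneg v = (case v of [] \<Rightarrow> False | c#cs \<Rightarrow> c < 0 \<and> nonpos cs)"

lemma hv_nonneg: "m \<ge> 0 \<Longrightarrow> nonneg v \<Longrightarrow> hv v m \<ge> 0"
  by (induction v) (auto simp: nonneg_def)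
lemma hv_nonpos: "m \<ge> 0 \<Longrightarrow> nonpos v \<Longrightarrow> hv v m \<le> 0"
proof (induction v)
  case (Cons a v)
  then have "hv v m \<le> 0" "a \<le> 0" by (auto simp: nonpos_def)
  then have "m * hv v m \<le> 0" using Cons.prems(1) by (simp add: mult_nonneg_nonpos)
  then show ?case using \<open>a \<le> 0\<close> by simp
qed simp
lemma hv_spos: assumes "m \<ge> 0" "spos v" shows "hv v m > 0"
proof (cases v)
  case (Cons a l)
  then have "a > 0" "nonneg l" using \<open>spos v\<close> by (auto simp: spos_def)
  then have "m * hv l m \<ge> 0" using hv_nonneg[OF \<open>m \<ge> 0\<close>] \<open>m \<ge> 0\<close> by simp
  then show ?thesis using Cons \<open>a > 0\<close> by simp
qed (use \<open>spos v\<close> in \<open>simp add: spos_def\<close>)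
lemma hv_sneg: assumes "m \<ge> 0" "sneg v" shows "hv v m < 0"
proof (cases v)
  case (Cons a l)
  then have "a < 0" "nonpos l" using \<open>sneg v\<close> by (auto simp: sneg_def)
  then have "m * hv l m \<le> 0" using hv_nonpos[OF \<open>m \<ge> 0\<close>] \<open>m \<ge> 0\<close> by (simp add: mult_nonneg_nonpos)
  then show ?thesis using Cons \<open>a < 0\<close> by simp
qed (use \<open>sneg v\<close> in \<open>simp add: sneg_def\<close>)

definition vsum :: "int list list \<Rightarrow> int list" where "vsum vs = foldr vadd vs []"

lemma hv_vsum: "hv (vsum vs) m = sum_list (map (\<lambda>v. hv v m) vs)"
  by (induction vs) (auto simp: vsum_def hv_vadd)

definition negp :: "int list list \<Rightarrow> nat list \<Rightarrow> int list" where
  "negp d L = vsum (map (\<lambda>i. if nonneg (d!i) then [] else d!i) L)"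
definition posp :: "int list list \<Rightarrow> nat list \<Rightarrow> int list" where
  "posp d L = vsum (map (\<lambda>i. if nonneg (d!i) then d!i else []) L)"

lemma bounds:
  assumes m: "m \<ge> 0" and x: "\<forall>i. x i = 0 \<or> x i = (1::int)"
    and sg: "list_all (\<lambda>i. nonneg (d!i) \<or> nonpos (d!i)) L"
  shows "hv (negp d L) m \<le> sum_list (map (\<lambda>i. x i * hv (d!i) m) L)
       \<and> sum_list (map (\<lambda>i. x i * hv (d!i) m) L) \<le> hv (posp d L) m"
  using sg
proof (induction L)
  case Nil
  then show ?case by (simp add: negp_def posp_def vsum_def)
next
  case (Cons i L)
  have IH: "hv (negp d L) m \<le> sum_list (map (\<lambda>i. x i * hv (d!i) m) L)"
    "sum_list (map (\<lambda>i. x i * hv (d!i) m) L) \<le> hv (posp d L) m" using Cons by auto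
  have ngp: "negp d (i#L) = vadd (if nonneg (d!i) then [] else d!i) (negp d L)"
    "posp d (i#L) = vadd (if nonneg (d!i) then d!i else []) (posp d L)"
    by (simp_all add: negp_def posp_def vsum_def)
  show ?case
  proof (cases "nonneg (d!i)")
    case True
    then have "hv (d!i) m \<ge> 0" using hv_nonneg m by auto
    then have "0 \<le> x i * hv (d!i) m \<and> x i * hv (d!i) m \<le> hv (d!i) m" using x[rule_format, of i] by auto
    then show ?thesis using IH True by (simp add: ngp hv_vadd)
  next
    case False
    then have "nonpos (d!i)" using Cons.prems by simp
    then have "hv (d!i) m \<le> 0" using hv_nonpos m by auto
    then have "hv (d!i) m \<le> x i * hv (d!i) m \<and> x i * hv (d!i) m \<le> 0" using x[rule_format, of i] by auto
    then show ?thesis using IH False by (simp add: ngp hv_vadd)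
  qed
qed

definition excl :: "int list list \<Rightarrow> nat list \<Rightarrow> int list \<Rightarrow> bool" where
  "excl d L c = (spos (vadd c (negp d L)) \<or> sneg (vadd c (posp d L)))"

lemma excl_ne:
  assumes m: "m \<ge> 0" and x: "\<forall>i. x i = 0 \<or> x i = (1::int)"
    and sg: "list_all (\<lambda>i. nonneg (d!i) \<or> nonpos (d!i)) L" and e: "excl d L c"
  shows "hv c m + sum_list (map (\<lambda>i. x i * hv (d!i) m) L) \<noteq> 0"
proof -
  note b = bounds[OF m x sg]
  from e show ?thesis
  proof (unfold excl_def, elim disjE)
    assume "spos (vadd c (negp d L))"
    then have "hv c m + hv (negp d L) m > 0" using hv_spos[OF m] hv_vadd by metis
    then show ?thesis using b by linarith
  next
    assume "sneg (vadd c (posp d L))"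
    then have "hv c m + hv (posp d L) m < 0" using hv_sneg[OF m] hv_vadd by metis
    then show ?thesis using b by linarith
  qed
qed

definition freel :: "nat list \<Rightarrow> nat \<Rightarrow> nat list" where
  "freel K b = filter (\<lambda>i. i \<notin> set K \<and> i \<noteq> b) [0..<26]"

definition check_step :: "int list list \<Rightarrow> nat list \<Rightarrow> nat \<Rightarrow> bool" where
  "check_step d K b = (0 \<in> set K \<and> b \<notin> set K \<and> b < 26 \<and> distinct K \<and> list_all (\<lambda>i. i < 26) K \<and>
     list_all (\<lambda>i. nonneg (d!i) \<or> nonpos (d!i)) (freel K b) \<and>
     excl d (freel K b) (vsum (map (\<lambda>i. d!i) K)) \<and> excl d (freel K b) (d!b))"

lemma sum_split:
  fixes f :: "nat \<Rightarrow> int"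
  assumes "check_step d K b"
  shows "(\<Sum>i<26. f i) = sum_list (map f K) + f b + sum_list (map f (freel K b)) "
proof -
  have c: "0 \<in> set K" "b \<notin> set K" "b < 26" "distinct K" "\<forall>i\<in>set K. i < 26"
    using assms by (auto simp: check_step_def list_all_iff)
  have dj: "distinct (freel K b)" by (simp add: freel_def)
  have U: "{..<26} = set K \<union> ({b} \<union> set (freel K b))" using c by (auto simp: freel_def)
  have "(\<Sum>i<26. f i) = sum f (set K) + sum f ({b} \<union> set (freel K b))"
    unfolding U by (rule sum.union_disjoint) (use c in \<open>auto simp: freel_def\<close>)
  also have "sum f ({b} \<union> set (freel K b)) = f b + sum f (set (freel K b))"
    using sum.insert[of "set (freel K b)" b f] by (simp add: freel_def)
  finally show ?thesis using c dj by (simp add: sum_list_distinct_conv_sum_set)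
qed

lemma cascade_step:
  assumes chk: "check_step d K b" and m: "m \<ge> 0" and x: "\<forall>i. x i = 0 \<or> x i = (1::int)"
    and K: "\<forall>i\<in>set K. x i = x 0" and D: "(\<Sum>i<26. x i * hv (d!i) m) = 0"
  shows "x b = x 0"
proof (rule ccontr)
  assume ne: "x b \<noteq> x 0"
  have sg: "list_all (\<lambda>i. nonneg (d!i) \<or> nonpos (d!i)) (freel K b)"
    and e1: "excl d (freel K b) (vsum (map (\<lambda>i. d!i) K))" and e2: "excl d (freel K b) (d!b)"
    using chk by (auto simp: check_step_def)
  let ?S = "sum_list (map (\<lambda>i. x i * hv (d!i) m) (freel K b))"
  have split: "(\<Sum>i<26. x i * hv (d!i) m) = sum_list (map (\<lambda>i. x i * hv (d!i) m) K) + x b * hv (d!b) m + ?S"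
    by (rule sum_split[OF chk])
  have sK: "sum_list (map (\<lambda>i. x i * hv (d!i) m) K) = x 0 * hv (vsum (map (\<lambda>i. d!i) K)) m"
  proof -
    have "sum_list (map (\<lambda>i. x i * hv (d!i) m) K) = sum_list (map (\<lambda>i. x 0 * hv (d!i) m) K)"
      using K by (intro arg_cong[where f=sum_list] map_cong) auto
    also have "\<dots> = x 0 * sum_list (map (\<lambda>i. hv (d!i) m) K)" by (induction K) (auto simp: algebra_simps)
    finally show ?thesis by (simp add: hv_vsum o_def)
  qed
  show False
  proof (cases "x 0 = 1")
    case True
    then have "x b = 0" using ne x by metis
    then have "hv (vsum (map (\<lambda>i. d!i) K)) m + ?S = 0" using D split sK True by simp
    then show False using excl_ne[OF m x sg e1] by simp
  next
    case False
    then have "x 0 = 0" "x b = 1" using ne x by metis+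
    then have "hv (d!b) m + ?S = 0" using D split sK by simp
    then show False using excl_ne[OF m x sg e2] by simp
  qed
qed


lemma hv_smult: "hv (map ((*) c) v) m = c * hv v m"
  by (induction v) (auto simp: algebra_simps)

lemma T_formula:
  fixes n t :: nat
  assumes Fsub: "F \<subseteq> {g. g \<subseteq> edges {0..<n} \<and> card g = 5}"
    and Finv: "\<forall>\<pi>. bij_betw \<pi> {0..<n} {0..<n} \<longrightarrow> (\<forall>g. g \<subseteq> edges {0..<n} \<longrightarrow> (img \<pi> g \<in> F \<longleftrightarrow> g \<in> F))"
    and n34: "34 \<le> n" and nT: "normal Tl" and Tt: "gr Tl \<subseteq> edges {0..<t}" and cT: "card (gr Tl) = 3"
    and t6: "t \<le> 6" and R: "repok reps"
    and Wf: "\<forall>k<5. map fst (Ws!k) = LL Tl t k \<and> list_all (wok reps Tl) (Ws!k) \<and> list_all (\<lambda>w. fst (snd w) < 26) (Ws!k)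
         \<and> map (\<lambda>i. int (count_list (map (\<lambda>w. fst (snd w)) (Ws!k)) i)) [0..<26] = CN!k"
    and B: "\<forall>k<5. 24 * int ((n - t) choose k) = hv (bp!k) (int n - 34)"
    and Qd: "Q = map (\<lambda>i. vsum (map (\<lambda>k. map ((*) (CN!k!i)) (bp!k)) [0..<5])) [0..<26]"
  shows "24 * int (card {g\<in>F. gr Tl \<subseteq> g}) = (\<Sum>i<26. of_bool (gr (reps!i) \<in> F) * hv (Q!i) (int n - 34))"
proof -
  define x where "x i = (of_bool (gr (reps!i) \<in> F) :: int)" for i
  define m where "m = int n - 34"
  have beta: "int (card {P \<in> Qs n (gr Tl) t {t..<t+k}. gr Tl \<union> P \<in> F}) = (\<Sum>i<26. CN!k!i * x i)" if k: "k < 5" for k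
  proof -
    have w: "map fst (Ws!k) = LL Tl t k" "list_all (wok reps Tl) (Ws!k)" "list_all (\<lambda>w. fst (snd w) < 26) (Ws!k)"
      "map (\<lambda>i. int (count_list (map (\<lambda>w. fst (snd w)) (Ws!k)) i)) [0..<26] = CN!k" using Wf k by auto
    have "card {P \<in> Qs n (gr Tl) t {t..<t+k}. gr Tl \<union> P \<in> F} = length (filter (\<lambda>q. gr Tl \<union> pe q \<in> F) (LL Tl t k))"
      by (rule card_filter_LL[OF nT]) (use k t6 n34 in auto)
    also have "\<dots> = length (filter (\<lambda>w. gr (reps ! fst (snd w)) \<in> F) (Ws!k))"
      using witness_count[OF Finv _ R w(2)] n34 w(1) by simp
    finally have "int (card {P \<in> Qs n (gr Tl) t {t..<t+k}. gr Tl \<union> P \<in> F})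
       = (\<Sum>i<26. int (count_list (map (\<lambda>w. fst (snd w)) (Ws!k)) i) * of_bool (gr (reps!i) \<in> F))"
      using filter_count[of "Ws!k" "\<lambda>w. fst (snd w)" 26 "\<lambda>i. gr (reps!i) \<in> F"] w(3) by (simp add: list_all_iff)
    also have "\<dots> = (\<Sum>i<26. CN!k!i * x i)"
    proof (rule sum.cong[OF refl])
      fix i assume i: "i \<in> {..<(26::nat)}"
      have "CN!k!i = int (count_list (map (\<lambda>w. fst (snd w)) (Ws!k)) i)" using w(4)[symmetric] i by simp
      then show "int (count_list (map (\<lambda>w. fst (snd w)) (Ws!k)) i) * of_bool (gr (reps!i) \<in> F) = CN!k!i * x i"
        by (simp add: x_def)
    qed
    finally show ?thesis .
  qed
  let ?b = "\<lambda>k. card {P \<in> Qs n (gr Tl) t {t..<t+k}. gr Tl \<union> P \<in> F}"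
  let ?h = "\<lambda>k. hv (bp!k) m"
  let ?c = "\<lambda>k i. CN!k!i"
  have cf: "card {g\<in>F. gr Tl \<subseteq> g} = (\<Sum>k\<le>4. (n - t choose k) * ?b k)"
    by (rule count_formula[OF Fsub Finv Tt cT]) (use t6 n34 in auto)
  have "24 * int (card {g\<in>F. gr Tl \<subseteq> g}) = 24 * (\<Sum>k\<le>4. int (n - t choose k) * int (?b k))"
    by (subst cf) (simp only: of_nat_sum of_nat_mult)
  also have "\<dots> = (\<Sum>k\<le>4. (24 * int (n - t choose k)) * int (?b k))"
    by (simp only: sum_distrib_left mult.assoc)
  also have "\<dots> = (\<Sum>k\<le>4. ?h k * (\<Sum>i<26. ?c k i * x i))"
  proof (rule sum.cong[OF refl])
    fix k assume "k \<in> {..(4::nat)}"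
    then have k: "k < 5" by auto
    show "24 * int (n - t choose k) * int (?b k) = ?h k * (\<Sum>i<26. ?c k i * x i)"
      using B k beta[OF k] by (simp add: m_def)
  qed
  also have "\<dots> = (\<Sum>k\<le>4. \<Sum>i<26. x i * (?c k i * ?h k))"
    by (simp only: sum_distrib_left mult_ac)
  also have "\<dots> = (\<Sum>i<26. \<Sum>k\<le>4. x i * (?c k i * ?h k))"
    by (rule sum.swap)
  also have "\<dots> = (\<Sum>i<26. x i * (\<Sum>k\<le>4. ?c k i * ?h k))"
    by (simp only: sum_distrib_left)
  also have "\<dots> = (\<Sum>i<26. x i * hv (Q!i) m)"
  proof (rule sum.cong[OF refl])
    fix i assume i: "i \<in> {..<(26::nat)}"
    have "hv (Q!i) m = hv (vsum (map (\<lambda>k. map ((*) (CN!k!i)) (bp!k)) [0..<5])) m" using Qd i by simp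
    also have "\<dots> = sum_list (map (\<lambda>k. CN!k!i * hv (bp!k) m) [0..<5])" by (simp add: hv_vsum hv_smult o_def)
    also have "\<dots> = (\<Sum>k\<in>set [0..<5]. CN!k!i * hv (bp!k) m)" by (rule sum_set_upt_conv_sum_list_nat[symmetric])
    also have "set [0..<5] = {..(4::nat)}" by auto
    finally show "x i * (\<Sum>k\<le>4. ?c k i * ?h k) = x i * hv (Q!i) m" by simp
  qed
  finally show ?thesis by (simp add: x_def m_def)
qed


fun pf :: "('a\<times>'a \<Rightarrow> bool) \<Rightarrow> 'a list \<Rightarrow> ('a\<times>'a) list" where
  "pf P [] = []" | "pf P (x#xs) = map (Pair x) (filter (\<lambda>y. P (x,y)) xs) @ pf P xs"
definition cov :: "nat \<Rightarrow> nat \<Rightarrow> (nat\<times>nat)\<times>(nat\<times>nat) \<Rightarrow> bool" where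
 "cov t k q = list_all (\<lambda>v. v = fst (fst q) \<or> v = snd (fst q) \<or> v = fst (snd q) \<or> v = snd (snd q)) [t..<t+k]"

lemma pf_eq: "pf P xs = filter P (pairs_of xs)"
  by (induction xs) (auto simp: filter_map o_def)

lemma pairs_of_filter: "pairs_of (filter P xs) = filter (\<lambda>q. P (fst q) \<and> P (snd q)) (pairs_of xs)"
  by (induction xs) (auto simp: filter_map o_def)

lemma LL_fast: "LL Tl t k = pf (cov t k) (filter (\<lambda>e. e \<notin> set Tl) (EL (t+k)))"
  unfolding LL_def pf_eq pairs_of_filter filter_filter
  by (rule filter_cong) (auto simp: cnd_def cov_def)


definition dd :: "int list list \<Rightarrow> int list list \<Rightarrow> int list list" where
  "dd Q1 Q2 = map2 (\<lambda>a b. vadd a (map uminus b)) Q1 Q2"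

lemma hv_uminus: "hv (map uminus b) m = - hv b m"
  by (induction b) auto

lemma dd_sum:
  assumes "length Q1 = 26" "length Q2 = 26"
  shows "(\<Sum>i<26. x i * hv (dd Q1 Q2 ! i) m) = (\<Sum>i<26. x i * hv (Q1!i) m) - (\<Sum>i<26. x i * hv (Q2!i) m)"
proof -
  have "\<And>i. i < 26 \<Longrightarrow> x i * hv (dd Q1 Q2 ! i) m = x i * hv (Q1!i) m - x i * hv (Q2!i) m"
    using assms by (simp add: dd_def hv_vadd hv_uminus algebra_simps)
  then show ?thesis by (simp add: sum_subtractf)
qed

lemma card_gr: "normal l \<Longrightarrow> distinct l \<Longrightarrow> card (gr l) = length l"
  unfolding gr_def normal_def
proof (subst card_image)
  assume "\<forall>x\<in>set l. fst x < snd x"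
  then have "set l \<subseteq> {(a,b). a < b}" by auto
  then show "inj_on eset (set l)" by (rule inj_on_subset[OF inj_on_eset])
qed (simp_all add: distinct_card)

lemma gr_sub: "normal l \<Longrightarrow> list_all (\<lambda>e. snd e < n) l \<Longrightarrow> gr l \<subseteq> edges {0..<n}"
  by (force simp: normal_def gr_def eset_def edges_def subsets_of_card_def list_all_iff)

lemma All_inv:
  fixes n :: nat
  assumes \<pi>: "bij_betw \<pi> {0..<n} {0..<n}" and g: "g \<subseteq> edges {0..<n}"
  shows "(img \<pi> g \<in> {g. g \<subseteq> edges {0..<n} \<and> card g = 5}) = (g \<in> {g. g \<subseteq> edges {0..<n} \<and> card g = 5})"
proof -
  have injs: "inj_on \<pi> {0..<n}" using \<pi> by (auto simp: bij_betw_def)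
  have inje: "inj_on (image \<pi>) (edges {0..<n})"
    by (rule inj_on_subset[OF inj_on_image_Pow[OF injs]]) (auto simp: edges_def subsets_of_card_def)
  have "img \<pi> g \<subseteq> edges {0..<n}"
  proof
    fix e' assume "e' \<in> img \<pi> g"
    then obtain e where e: "e \<in> g" "e' = \<pi> ` e" by (auto simp: img_def)
    then have "e \<subseteq> {0..<n}" "card e = 2" using g by (auto simp: edges_def subsets_of_card_def)
    moreover have "inj_on \<pi> e" using injs \<open>e \<subseteq> {0..<n}\<close> inj_on_subset by blast
    moreover have "\<pi> ` e \<subseteq> {0..<n}" using \<pi> \<open>e \<subseteq> {0..<n}\<close> by (auto simp: bij_betw_def)
    ultimately show "e' \<in> edges {0..<n}" using e by (simp add: edges_def subsets_of_card_def card_image)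
  qed
  moreover have "card (img \<pi> g) = card g" unfolding img_def using card_image[OF inj_on_subset[OF inje g]] .
  ultimately show ?thesis using g by auto
qed

lemma All_count:
  fixes n :: nat
  assumes T: "T \<subseteq> edges {0..<n}" "card T = 3"
  shows "card {g\<in>{g. g \<subseteq> edges {0..<n} \<and> card g = 5}. T \<subseteq> g} = (card (edges {0..<n}) - 3) choose 2"
proof -
  let ?A = "{g. g \<subseteq> edges {0..<n} \<and> card g = 5}"
  have fT: "finite T" using finite_subset[OF T(1) finite_edges] .
  have "card {g\<in>?A. T \<subseteq> g} = card {P. P \<subseteq> edges {0..<n} - T \<and> card P = 2 \<and> T \<union> P \<in> ?A}"
    by (rule super_count) (use T in auto)
  also have "{P. P \<subseteq> edges {0..<n} - T \<and> card P = 2 \<and> T \<union> P \<in> ?A} = {P. P \<subseteq> edges {0..<n} - T \<and> card P = 2}"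
  proof -
    have "T \<union> P \<in> ?A" if "P \<subseteq> edges {0..<n} - T" "card P = 2" for P
    proof -
      have fP: "finite P" using finite_subset[OF _ finite_edges] that(1) by blast
      have "card (T \<union> P) = card T + card P" by (rule card_Un_disjoint) (use fT fP that in auto)
      then show ?thesis using that T by auto
    qed
    then show ?thesis by blast
  qed
  also have "card {P. P \<subseteq> edges {0..<n} - T \<and> card P = 2} = card (edges {0..<n} - T) choose 2"
    by (rule n_subsets) (simp add: finite_edges)
  also have "card (edges {0..<n} - T) = card (edges {0..<n}) - 3" using T fT by (simp add: card_Diff_subset)
  finally show ?thesis .
qed



definition reps :: "(nat\<times>nat) list list" where "reps = [[(0,1),(2,3),(4,5),(6,7),(8,9)],[(0,1),(2,3),(4,5),(6,7),(6,8)],[(0,1),(2,3),(4,5),(4,6),(5,6)],[(0,1),(2,3),(4,5),(4,6),(4,7)],[(0,1),(2,3),(4,5),(4,6),(5,7)],[(0,1),(2,3),(2,4),(5,6),(5,7)],[(0,1),(2,3),(2,4),(2,5),(3,4)],[(0,1),(2,3),(2,4),(3,5),(4,5)],[(0,1),(2,3),(2,4),(2,5),(2,6)],[(0,1),(2,3),(2,4),(2,5),(3,6)],[(0,1),(2,3),(2,4),(3,5),(4,6)],[(0,1),(0,2),(3,4),(3,5),(4,5)],[(0,1),(0,2),(3,4),(3,5),(3,6)],[(0,1),(0,2),(3,4),(3,5),(4,6)],[(0,1),(0,2),(0,3),(1,2),(1,3)],[(0,1),(0,2),(0,3),(0,4),(1,2)],[(0,1),(0,2),(0,3),(1,2),(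1,4)],[(0,1),(0,2),(0,3),(1,2),(3,4)],[(0,1),(0,2),(0,3),(1,4),(2,4)],[(0,1),(0,2),(1,3),(2,4),(3,4)],[(0,1),(0,2),(0,3),(0,4),(0,5)],[(0,1),(0,2),(0,3),(0,4),(1,5)],[(0,1),(0,2),(0,3),(1,4),(1,5)],[(0,1),(0,2),(0,3),(1,4),(2,5)],[(0,1),(0,2),(0,3),(1,4),(4,5)],[(0,1),(0,2),(1,3),(2,4),(3,5)]]"

definition TS :: "(nat\<times>nat) list" where "TS = [(0,1),(0,2),(0,3)]"

definition WS0 :: "(((nat\<times>nat)\<times>(nat\<times>nat))\<times>nat\<times>nat list) list" where "WS0 = [(((1,2),(1,3)),14,[0,1,2,3,4,5,6,7,8,9]),(((1,2),(2,3)),14,[0,2,1,3,4,5,6,7,8,9]),(((1,3),(2,3)),14,[0,3,1,2,4,5,6,7,8,9])]"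

definition WS1 :: "(((nat\<times>nat)\<times>(nat\<times>nat))\<times>nat\<times>nat list) list" where "WS1 = [(((1,2),(0,4)),15,[0,1,2,3,4,5,6,7,8,9]),(((1,2),(1,4)),16,[0,1,2,3,4,5,6,7,8,9]),(((1,2),(2,4)),16,[0,2,1,3,4,5,6,7,8,9]),(((1,2),(3,4)),17,[0,1,2,3,4,5,6,7,8,9]),(((1,3),(0,4)),15,[0,1,3,2,4,5,6,7,8,9]),(((1,3),(1,4)),16,[0,1,3,2,4,5,6,7,8,9]),(((1,3),(2,4)),17,[0,1,3,2,4,5,6,7,8,9]),(((1,3),(3,4)),16,[0,3,1,2,4,5,6,7,8,9]),(((2,3),(0,4)),15,[0,2,3,1,4,5,6,7,8,9]),(((2,3),(1,4)),17,[0,2,3,1,4,5,6,7,8,9]),(((2,3),(2,4)),16,[0,2,3,1,4,5,6,7,8,9]),(((2,3),(3,4)),16,[0,3,2,1,4,5,6,7,8,9]),(((0,4),(1,4)),15,[0,1,4,2,3,5,6,7,8,9]),(((0,4),(2,4)),15,[0,2,4,1,3,5,6,7,8,9]),(((0,4),(3,4)),15,[0,3,4,1,2,5,6,7,8,9]),(((1,4),(2,4)),18,[0,1,2,3,4,5,6,7,8,9]),(((1,4),(3,4)),18,[0,1,3,2,4,5,6,7,8,9]),(((2,4),(3,4)),18,[0,2,3,1,4,5,6,7,8,9])]"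

definition WS2 :: "(((nat\<times>nat)\<times>(nat\<times>nat))\<times>nat\<times>nat list) list" where "WS2 = [(((1,2),(4,5)),6,[4,5,0,1,2,3,6,7,8,9]),(((1,3),(4,5)),6,[4,5,0,1,3,2,6,7,8,9]),(((2,3),(4,5)),6,[4,5,0,2,3,1,6,7,8,9]),(((0,4),(0,5)),20,[0,1,2,3,4,5,6,7,8,9]),(((0,4),(1,5)),21,[0,1,2,3,4,5,6,7,8,9]),(((0,4),(2,5)),21,[0,2,1,3,4,5,6,7,8,9]),(((0,4),(3,5)),21,[0,3,1,2,4,5,6,7,8,9]),(((0,4),(4,5)),21,[0,4,1,2,3,5,6,7,8,9]),(((1,4),(0,5)),21,[0,1,2,3,5,4,6,7,8,9]),(((1,4),(1,5)),22,[0,1,2,3,4,5,6,7,8,9]),(((1,4),(2,5)),23,[0,1,2,3,4,5,6,7,8,9]),(((1,4),(3,5)),23,[0,1,3,2,4,5,6,7,8,9]),(((1,4),(4,5)),24,[0,1,2,3,4,5,6,7,8,9]),(((2,4),(0,5)),21,[0,2,1,3,5,4,6,7,8,9]),(((2,4),(1,5)),23,[0,1,2,3,5,4,6,7,8,9]),(((2,4),(2,5)),22,[0,2,1,3,4,5,6,7,8,9]),(((2,4),(3,5)),23,[0,2,3,1,4,5,6,7,8,9]),(((2,4),(4,5)),24,[0,2,1,3,4,5,6,7,8,9]),(((3,4),(0,5)),21,[0,3,1,2,5,4,6,7,8,9]),(((3,4),(1,5)),23,[0,1,3,2,5,4,6,7,8,9]),(((3,4),(2,5)),23,[0,2,3,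1,5,4,6,7,8,9]),(((3,4),(3,5)),22,[0,3,1,2,4,5,6,7,8,9]),(((3,4),(4,5)),24,[0,3,1,2,4,5,6,7,8,9]),(((0,5),(4,5)),21,[0,5,1,2,3,4,6,7,8,9]),(((1,5),(4,5)),24,[0,1,2,3,5,4,6,7,8,9]),(((2,5),(4,5)),24,[0,2,1,3,5,4,6,7,8,9]),(((3,5),(4,5)),24,[0,3,1,2,5,4,6,7,8,9])]"

definition WS3 :: "(((nat\<times>nat)\<times>(nat\<times>nat))\<times>nat\<times>nat list) list" where "WS3 = [(((0,4),(5,6)),8,[5,6,0,1,2,3,4,7,8,9]),(((1,4),(5,6)),9,[5,6,0,1,2,3,4,7,8,9]),(((2,4),(5,6)),9,[5,6,0,2,1,3,4,7,8,9]),(((3,4),(5,6)),9,[5,6,0,3,1,2,4,7,8,9]),(((0,5),(4,6)),8,[4,6,0,1,2,3,5,7,8,9]),(((1,5),(4,6)),9,[4,6,0,1,2,3,5,7,8,9]),(((2,5),(4,6)),9,[4,6,0,2,1,3,5,7,8,9]),(((3,5),(4,6)),9,[4,6,0,3,1,2,5,7,8,9]),(((4,5),(0,6)),8,[4,5,0,1,2,3,6,7,8,9]),(((4,5),(1,6)),9,[4,5,0,1,2,3,6,7,8,9]),(((4,5),(2,6)),9,[4,5,0,2,1,3,6,7,8,9]),(((4,5),(3,6)),9,[4,5,0,3,1,2,6,7,8,9]),(((4,5),(4,6)),12,[4,5,6,0,1,2,3,7,8,9]),(((4,5),(5,6)),12,[5,4,6,0,1,2,3,7,8,9]),(((4,6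),(5,6)),12,[6,4,5,0,1,2,3,7,8,9])]"

definition WS4 :: "(((nat\<times>nat)\<times>(nat\<times>nat))\<times>nat\<times>nat list) list" where "WS4 = [(((4,5),(6,7)),3,[4,5,6,7,0,1,2,3,8,9]),(((4,6),(5,7)),3,[4,6,5,7,0,1,2,3,8,9]),(((5,6),(4,7)),3,[4,7,5,6,0,1,2,3,8,9])]"

definition CNS :: "int list list" where "CNS = [[0,0,0,0,0,0,0,0,0,0,0,0,0,0,3,0,0,0,0,0,0,0,0,0,0,0],[0,0,0,0,0,0,0,0,0,0,0,0,0,0,0,6,6,3,3,0,0,0,0,0,0,0],[0,0,0,0,0,0,3,0,0,0,0,0,0,0,0,0,0,0,0,0,1,8,3,6,6,0],[0,0,0,0,0,0,0,0,3,9,0,0,3,0,0,0,0,0,0,0,0,0,0,0,0,0],[0,0,0,3,0,0,0,0,0,0,0,0,0,0,0,0,0,0,0,0,0,0,0,0,0,0]]"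

definition QS :: "int list list" where "QS = [[0,0,0,0,0],[0,0,0,0,0],[0,0,0,0,0],[1973160,277362,14613,342,3],[0,0,0,0,0],[0,0,0,0,0],[31320,2124,36,0,0],[0,0,0,0,0],[292320,30264,1044,12,0],[876960,90792,3132,36,0],[0,0,0,0,0],[0,0,0,0,0],[292320,30264,1044,12,0],[0,0,0,0,0],[72,0,0,0,0],[4320,144,0,0,0],[4320,144,0,0,0],[2160,72,0,0,0],[2160,72,0,0,0],[0,0,0,0,0],[10440,708,12,0,0],[83520,5664,96,0,0],[31320,2124,36,0,0],[62640,4248,72,0,0],[62640,4248,72,0,0],[0,0,0,0,0]]"

definition bpS :: "int list list" where "bpS = [[24],[720,24],[10440,708,12],[97440,10088,348,4],[657720,92454,4871,114,1]]"

definition TP :: "(nat\<times>nat) list" where "TP = [(0,1),(1,2),(3,4)]"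

definition WP0 :: "(((nat\<times>nat)\<times>(nat\<times>nat))\<times>nat\<times>nat list) list" where "WP0 = [(((0,2),(0,3)),17,[0,1,2,3,4,5,6,7,8,9]),(((0,2),(1,3)),17,[1,0,2,3,4,5,6,7,8,9]),(((0,2),(2,3)),17,[2,0,1,3,4,5,6,7,8,9]),(((0,2),(0,4)),17,[0,1,2,4,3,5,6,7,8,9]),(((0,2),(1,4)),17,[1,0,2,4,3,5,6,7,8,9]),(((0,2),(2,4)),17,[2,0,1,4,3,5,6,7,8,9]),(((0,3),(1,3)),16,[1,3,0,2,4,5,6,7,8,9]),(((0,3),(2,3)),18,[3,0,2,4,1,5,6,7,8,9]),(((0,3),(0,4)),17,[0,3,4,1,2,5,6,7,8,9]),(((0,3),(1,4)),18,[1,0,4,2,3,5,6,7,8,9]),(((0,3),(2,4)),19,[0,1,3,2,4,5,6,7,8,9]),(((1,3),(2,3)),16,[1,3,2,0,4,5,6,7,8,9]),(((1,3),(0,4)),18,[1,0,3,2,4,5,6,7,8,9]),(((1,3),(1,4)),15,[1,3,4,0,2,5,6,7,8,9]),(((1,3),(2,4)),18,[1,2,3,0,4,5,6,7,8,9]),(((2,3),(0,4)),19,[0,1,4,2,3,5,6,7,8,9]),(((2,3),(1,4)),18,[1,2,4,0,3,5,6,7,8,9]),(((2,3),(2,4)),17,[2,3,4,1,0,5,6,7,8,9]),(((0,4),(1,4)),16,[1,4,0,2,3,5,6,7,8,9]),(((0,4),(2,4)),18,[4,0,2,3,1,5,6,7,8,9]),(((1,4),(2,4)),16,[1,4,2,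0,3,5,6,7,8,9])]"

definition WP1 :: "(((nat\<times>nat)\<times>(nat\<times>nat))\<times>nat\<times>nat list) list" where "WP1 = [(((0,2),(0,5)),6,[3,4,0,1,2,5,6,7,8,9]),(((0,2),(1,5)),6,[3,4,1,0,2,5,6,7,8,9]),(((0,2),(2,5)),6,[3,4,2,0,1,5,6,7,8,9]),(((0,2),(3,5)),11,[3,4,5,0,1,2,6,7,8,9]),(((0,2),(4,5)),11,[4,3,5,0,1,2,6,7,8,9]),(((0,3),(0,5)),23,[0,1,3,5,2,4,6,7,8,9]),(((0,3),(1,5)),24,[1,0,2,5,3,4,6,7,8,9]),(((0,3),(2,5)),25,[0,1,3,2,4,5,6,7,8,9]),(((0,3),(3,5)),24,[3,0,4,5,1,2,6,7,8,9]),(((0,3),(4,5)),25,[0,3,1,4,2,5,6,7,8,9]),(((1,3),(0,5)),23,[1,0,3,2,5,4,6,7,8,9]),(((1,3),(1,5)),21,[1,3,0,2,5,4,6,7,8,9]),(((1,3),(2,5)),23,[1,2,3,0,5,4,6,7,8,9]),(((1,3),(3,5)),22,[1,3,0,2,4,5,6,7,8,9]),(((1,3),(4,5)),24,[1,3,0,2,4,5,6,7,8,9]),(((2,3),(0,5)),25,[1,2,0,3,5,4,6,7,8,9]),(((2,3),(1,5)),24,[1,2,0,5,3,4,6,7,8,9]),(((2,3),(2,5)),23,[2,1,3,5,0,4,6,7,8,9]),(((2,3),(3,5)),24,[3,2,4,5,1,0,6,7,8,9]),(((2,3),(4,5)),25,[2,3,1,4,0,5,6,7,8,9]),(((0,4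),(0,5)),23,[0,1,4,5,2,3,6,7,8,9]),(((0,4),(1,5)),24,[1,0,2,5,4,3,6,7,8,9]),(((0,4),(2,5)),25,[0,1,4,2,3,5,6,7,8,9]),(((0,4),(3,5)),25,[0,4,1,3,2,5,6,7,8,9]),(((0,4),(4,5)),24,[4,0,3,5,1,2,6,7,8,9]),(((1,4),(0,5)),23,[1,0,4,2,5,3,6,7,8,9]),(((1,4),(1,5)),21,[1,4,0,2,5,3,6,7,8,9]),(((1,4),(2,5)),23,[1,2,4,0,5,3,6,7,8,9]),(((1,4),(3,5)),24,[1,4,0,2,3,5,6,7,8,9]),(((1,4),(4,5)),22,[1,4,0,2,3,5,6,7,8,9]),(((2,4),(0,5)),25,[1,2,0,4,5,3,6,7,8,9]),(((2,4),(1,5)),24,[1,2,0,5,4,3,6,7,8,9]),(((2,4),(2,5)),23,[2,1,4,5,0,3,6,7,8,9]),(((2,4),(3,5)),25,[2,4,1,3,0,5,6,7,8,9]),(((2,4),(4,5)),24,[4,2,3,5,1,0,6,7,8,9]),(((0,5),(1,5)),6,[3,4,1,0,5,2,6,7,8,9]),(((0,5),(2,5)),7,[3,4,0,1,5,2,6,7,8,9]),(((0,5),(3,5)),25,[0,5,1,3,2,4,6,7,8,9]),(((0,5),(4,5)),25,[0,5,1,4,2,3,6,7,8,9]),(((1,5),(2,5)),6,[3,4,1,2,5,0,6,7,8,9]),(((1,5),(3,5)),24,[1,5,0,2,3,4,6,7,8,9]),(((1,5),(4,5)),24,[1,5,0,2,4,3,6,7,8,9]),(((2,5),(3,5)),2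5,[2,5,1,3,0,4,6,7,8,9]),(((2,5),(4,5)),25,[2,5,1,4,0,3,6,7,8,9]),(((3,5),(4,5)),11,[1,0,2,3,4,5,6,7,8,9])]"

definition WP2 :: "(((nat\<times>nat)\<times>(nat\<times>nat))\<times>nat\<times>nat list) list" where "WP2 = [(((0,2),(5,6)),2,[3,4,5,6,0,1,2,7,8,9]),(((0,3),(5,6)),10,[5,6,0,1,3,2,4,7,8,9]),(((1,3),(5,6)),9,[5,6,1,3,0,2,4,7,8,9]),(((2,3),(5,6)),10,[5,6,2,1,3,0,4,7,8,9]),(((0,4),(5,6)),10,[5,6,0,1,4,2,3,7,8,9]),(((1,4),(5,6)),9,[5,6,1,4,0,2,3,7,8,9]),(((2,4),(5,6)),10,[5,6,2,1,4,0,3,7,8,9]),(((0,5),(0,6)),9,[3,4,0,1,5,6,2,7,8,9]),(((0,5),(1,6)),9,[3,4,1,0,2,6,5,7,8,9]),(((0,5),(2,6)),10,[3,4,1,0,2,5,6,7,8,9]),(((0,5),(3,6)),13,[3,4,6,0,1,5,2,7,8,9]),(((0,5),(4,6)),13,[4,3,6,0,1,5,2,7,8,9]),(((0,5),(5,6)),10,[3,4,0,1,5,2,6,7,8,9]),(((1,5),(0,6)),9,[3,4,1,0,2,5,6,7,8,9]),(((1,5),(1,6)),8,[3,4,1,0,2,5,6,7,8,9]),(((1,5),(2,6)),9,[3,4,1,2,0,5,6,7,8,9]),(((1,5),(3,6)),12,[3,4,6,1,0,2,5,7,8,9]),(((1,5),(4,6)),12,[4,3,6,1,0,2,5,7,8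,9]),(((1,5),(5,6)),9,[3,4,1,5,0,2,6,7,8,9]),(((2,5),(0,6)),10,[3,4,1,0,2,6,5,7,8,9]),(((2,5),(1,6)),9,[3,4,1,2,0,6,5,7,8,9]),(((2,5),(2,6)),9,[3,4,2,1,5,6,0,7,8,9]),(((2,5),(3,6)),13,[3,4,6,1,2,0,5,7,8,9]),(((2,5),(4,6)),13,[4,3,6,1,2,0,5,7,8,9]),(((2,5),(5,6)),10,[3,4,2,1,5,0,6,7,8,9]),(((3,5),(0,6)),13,[3,4,5,0,1,6,2,7,8,9]),(((3,5),(1,6)),12,[3,4,5,1,0,2,6,7,8,9]),(((3,5),(2,6)),13,[3,4,5,1,2,0,6,7,8,9]),(((3,5),(3,6)),12,[1,0,2,3,4,5,6,7,8,9]),(((3,5),(4,6)),13,[1,0,2,3,4,5,6,7,8,9]),(((3,5),(5,6)),13,[1,0,2,3,5,4,6,7,8,9]),(((4,5),(0,6)),13,[4,3,5,0,1,6,2,7,8,9]),(((4,5),(1,6)),12,[4,3,5,1,0,2,6,7,8,9]),(((4,5),(2,6)),13,[4,3,5,1,2,0,6,7,8,9]),(((4,5),(3,6)),13,[1,0,2,3,4,6,5,7,8,9]),(((4,5),(4,6)),12,[1,0,2,4,3,5,6,7,8,9]),(((4,5),(5,6)),13,[1,0,2,4,5,3,6,7,8,9]),(((0,6),(5,6)),10,[3,4,0,1,6,2,5,7,8,9]),(((1,6),(5,6)),9,[3,4,1,6,0,2,5,7,8,9]),(((2,6),(5,6)),10,[3,4,2,1,6,0,5,7,8,9]),(((3,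6),(5,6)),13,[1,0,2,3,6,4,5,7,8,9]),(((4,6),(5,6)),13,[1,0,2,4,6,3,5,7,8,9])]"

definition WP3 :: "(((nat\<times>nat)\<times>(nat\<times>nat))\<times>nat\<times>nat list) list" where "WP3 = [(((0,5),(6,7)),4,[3,4,6,7,0,1,5,2,8,9]),(((1,5),(6,7)),3,[3,4,6,7,1,0,2,5,8,9]),(((2,5),(6,7)),4,[3,4,6,7,1,2,0,5,8,9]),(((3,5),(6,7)),5,[6,7,1,0,2,3,4,5,8,9]),(((4,5),(6,7)),5,[6,7,1,0,2,4,3,5,8,9]),(((0,6),(5,7)),4,[3,4,5,7,0,1,6,2,8,9]),(((1,6),(5,7)),3,[3,4,5,7,1,0,2,6,8,9]),(((2,6),(5,7)),4,[3,4,5,7,1,2,0,6,8,9]),(((3,6),(5,7)),5,[5,7,1,0,2,3,4,6,8,9]),(((4,6),(5,7)),5,[5,7,1,0,2,4,3,6,8,9]),(((5,6),(0,7)),4,[3,4,5,6,0,1,7,2,8,9]),(((5,6),(1,7)),3,[3,4,5,6,1,0,2,7,8,9]),(((5,6),(2,7)),4,[3,4,5,6,1,2,0,7,8,9]),(((5,6),(3,7)),5,[5,6,1,0,2,3,4,7,8,9]),(((5,6),(4,7)),5,[5,6,1,0,2,4,3,7,8,9]),(((5,6),(5,7)),5,[3,4,1,0,2,5,6,7,8,9]),(((5,6),(6,7)),5,[3,4,1,0,2,6,5,7,8,9]),(((5,7),(6,7)),5,[3,4,1,0,2,7,5,6,8,9])]"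

definition WP4 :: "(((nat\<times>nat)\<times>(nat\<times>nat))\<times>nat\<times>nat list) list" where "WP4 = [(((5,6),(7,8)),1,[3,4,5,6,7,8,1,0,2,9]),(((5,7),(6,8)),1,[3,4,5,7,6,8,1,0,2,9]),(((6,7),(5,8)),1,[3,4,5,8,6,7,1,0,2,9])]"

definition CNP :: "int list list" where "CNP = [[0,0,0,0,0,0,0,0,0,0,0,0,0,0,0,1,4,8,6,2,0,0,0,0,0,0],[0,0,0,0,0,0,5,1,0,0,0,3,0,0,0,0,0,0,0,0,0,2,2,8,12,12],[0,0,1,0,0,0,0,0,1,10,10,0,6,14,0,0,0,0,0,0,0,0,0,0,0,0],[0,0,0,3,6,9,0,0,0,0,0,0,0,0,0,0,0,0,0,0,0,0,0,0,0,0],[0,3,0,0,0,0,0,0,0,0,0,0,0,0,0,0,0,0,0,0,0,0,0,0,0,0]]"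

definition QP :: "int list list" where "QP = [[0,0,0,0,0],[1710072,249150,13605,330,3],[9744,684,12,0,0],[263088,28212,1008,12,0],[526176,56424,2016,24,0],[789264,84636,3024,36,0],[3480,120,0,0,0],[696,24,0,0,0],[9744,684,12,0,0],[97440,6840,120,0,0],[97440,6840,120,0,0],[2088,72,0,0,0],[58464,4104,72,0,0],[136416,9576,168,0,0],[0,0,0,0,0],[24,0,0,0,0],[96,0,0,0,0],[192,0,0,0,0],[144,0,0,0,0],[48,0,0,0,0],[0,0,0,0,0],[1392,48,0,0,0],[1392,48,0,0,0],[5568,192,0,0,0],[8352,288,0,0,0],[8352,288,0,0,0]]"

definition bpP :: "int list list" where "bpP = [[24],[696,24],[9744,684,12],[87696,9404,336,4],[570024,83050,4535,110,1]]"

definition TK :: "(nat\<times>nat) list" where "TK = [(0,1),(2,3),(4,5)]"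

definition WK0 :: "(((nat\<times>nat)\<times>(nat\<times>nat))\<times>nat\<times>nat list) list" where "WK0 = [(((0,2),(1,2)),6,[4,5,2,0,1,3,6,7,8,9]),(((0,2),(0,3)),6,[4,5,0,2,3,1,6,7,8,9]),(((0,2),(1,3)),7,[4,5,0,1,2,3,6,7,8,9]),(((0,2),(0,4)),23,[0,2,4,1,3,5,6,7,8,9]),(((0,2),(1,4)),25,[0,1,2,4,3,5,6,7,8,9]),(((0,2),(2,4)),23,[2,0,4,3,1,5,6,7,8,9]),(((0,2),(3,4)),25,[2,3,0,4,1,5,6,7,8,9]),(((0,2),(0,5)),23,[0,2,5,1,3,4,6,7,8,9]),(((0,2),(1,5)),25,[0,1,2,5,3,4,6,7,8,9]),(((0,2),(2,5)),23,[2,0,5,3,1,4,6,7,8,9]),(((0,2),(3,5)),25,[2,3,0,5,1,4,6,7,8,9]),(((1,2),(0,3)),7,[4,5,0,1,3,2,6,7,8,9]),(((1,2),(1,3)),6,[4,5,1,2,3,0,6,7,8,9]),(((1,2),(0,4)),25,[0,1,4,2,5,3,6,7,8,9]),(((1,2),(1,4)),23,[1,2,4,0,3,5,6,7,8,9]),(((1,2),(2,4)),23,[2,1,4,3,0,5,6,7,8,9]),(((1,2),(3,4)),25,[2,3,1,4,0,5,6,7,8,9]),(((1,2),(0,5)),25,[0,1,5,2,4,3,6,7,8,9]),(((1,2),(1,5)),23,[1,2,5,0,3,4,6,7,8,9]),(((1,2),(2,5)),23,[2,1,5,3,0,4,6,7,8,9]),(((1,2),(3,5)),25,[2,3,1,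5,0,4,6,7,8,9]),(((0,3),(1,3)),6,[4,5,3,0,1,2,6,7,8,9]),(((0,3),(0,4)),23,[0,3,4,1,2,5,6,7,8,9]),(((0,3),(1,4)),25,[0,1,3,4,2,5,6,7,8,9]),(((0,3),(2,4)),25,[2,3,4,0,5,1,6,7,8,9]),(((0,3),(3,4)),23,[3,0,4,2,1,5,6,7,8,9]),(((0,3),(0,5)),23,[0,3,5,1,2,4,6,7,8,9]),(((0,3),(1,5)),25,[0,1,3,5,2,4,6,7,8,9]),(((0,3),(2,5)),25,[2,3,5,0,4,1,6,7,8,9]),(((0,3),(3,5)),23,[3,0,5,2,1,4,6,7,8,9]),(((1,3),(0,4)),25,[0,1,4,3,5,2,6,7,8,9]),(((1,3),(1,4)),23,[1,3,4,0,2,5,6,7,8,9]),(((1,3),(2,4)),25,[2,3,4,1,5,0,6,7,8,9]),(((1,3),(3,4)),23,[3,1,4,2,0,5,6,7,8,9]),(((1,3),(0,5)),25,[0,1,5,3,4,2,6,7,8,9]),(((1,3),(1,5)),23,[1,3,5,0,2,4,6,7,8,9]),(((1,3),(2,5)),25,[2,3,5,1,4,0,6,7,8,9]),(((1,3),(3,5)),23,[3,1,5,2,0,4,6,7,8,9]),(((0,4),(1,4)),6,[2,3,4,0,1,5,6,7,8,9]),(((0,4),(2,4)),23,[4,0,2,5,1,3,6,7,8,9]),(((0,4),(3,4)),23,[4,0,3,5,1,2,6,7,8,9]),(((0,4),(0,5)),6,[2,3,0,4,5,1,6,7,8,9]),(((0,4),(1,5)),7,[2,3,0,1,4,5,6,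7,8,9]),(((0,4),(2,5)),25,[4,5,0,2,1,3,6,7,8,9]),(((0,4),(3,5)),25,[4,5,0,3,1,2,6,7,8,9]),(((1,4),(2,4)),23,[4,1,2,5,0,3,6,7,8,9]),(((1,4),(3,4)),23,[4,1,3,5,0,2,6,7,8,9]),(((1,4),(0,5)),7,[2,3,0,1,5,4,6,7,8,9]),(((1,4),(1,5)),6,[2,3,1,4,5,0,6,7,8,9]),(((1,4),(2,5)),25,[4,5,1,2,0,3,6,7,8,9]),(((1,4),(3,5)),25,[4,5,1,3,0,2,6,7,8,9]),(((2,4),(3,4)),6,[0,1,4,2,3,5,6,7,8,9]),(((2,4),(0,5)),25,[4,5,2,0,3,1,6,7,8,9]),(((2,4),(1,5)),25,[4,5,2,1,3,0,6,7,8,9]),(((2,4),(2,5)),6,[0,1,2,4,5,3,6,7,8,9]),(((2,4),(3,5)),7,[0,1,2,3,4,5,6,7,8,9]),(((3,4),(0,5)),25,[4,5,3,0,2,1,6,7,8,9]),(((3,4),(1,5)),25,[4,5,3,1,2,0,6,7,8,9]),(((3,4),(2,5)),7,[0,1,2,3,5,4,6,7,8,9]),(((3,4),(3,5)),6,[0,1,3,4,5,2,6,7,8,9]),(((0,5),(1,5)),6,[2,3,5,0,1,4,6,7,8,9]),(((0,5),(2,5)),23,[5,0,2,4,1,3,6,7,8,9]),(((0,5),(3,5)),23,[5,0,3,4,1,2,6,7,8,9]),(((1,5),(2,5)),23,[5,1,2,4,0,3,6,7,8,9]),(((1,5),(3,5)),23,[5,1,3,4,0,2,6,7,8,9]),(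((2,5),(3,5)),6,[0,1,5,2,3,4,6,7,8,9])]"

definition WK1 :: "(((nat\<times>nat)\<times>(nat\<times>nat))\<times>nat\<times>nat list) list" where "WK1 = [(((0,2),(0,6)),9,[4,5,0,2,1,6,3,7,8,9]),(((0,2),(1,6)),10,[4,5,0,1,2,6,3,7,8,9]),(((0,2),(2,6)),9,[4,5,2,0,3,6,1,7,8,9]),(((0,2),(3,6)),10,[4,5,2,0,3,1,6,7,8,9]),(((0,2),(4,6)),13,[4,5,6,0,2,1,3,7,8,9]),(((0,2),(5,6)),13,[5,4,6,0,2,1,3,7,8,9]),(((1,2),(0,6)),10,[4,5,1,0,2,6,3,7,8,9]),(((1,2),(1,6)),9,[4,5,1,2,0,6,3,7,8,9]),(((1,2),(2,6)),9,[4,5,2,1,3,6,0,7,8,9]),(((1,2),(3,6)),10,[4,5,2,1,3,0,6,7,8,9]),(((1,2),(4,6)),13,[4,5,6,1,2,0,3,7,8,9]),(((1,2),(5,6)),13,[5,4,6,1,2,0,3,7,8,9]),(((0,3),(0,6)),9,[4,5,0,3,1,6,2,7,8,9]),(((0,3),(1,6)),10,[4,5,0,1,3,6,2,7,8,9]),(((0,3),(2,6)),10,[4,5,3,0,2,1,6,7,8,9]),(((0,3),(3,6)),9,[4,5,3,0,2,6,1,7,8,9]),(((0,3),(4,6)),13,[4,5,6,0,3,1,2,7,8,9]),(((0,3),(5,6)),13,[5,4,6,0,3,1,2,7,8,9]),(((1,3),(0,6)),10,[4,5,1,0,3,6,2,7,8,9]),(((1,3),(1,6)),9,[4,5,1,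3,0,6,2,7,8,9]),(((1,3),(2,6)),10,[4,5,3,1,2,0,6,7,8,9]),(((1,3),(3,6)),9,[4,5,3,1,2,6,0,7,8,9]),(((1,3),(4,6)),13,[4,5,6,1,3,0,2,7,8,9]),(((1,3),(5,6)),13,[5,4,6,1,3,0,2,7,8,9]),(((0,4),(0,6)),9,[2,3,0,4,1,6,5,7,8,9]),(((0,4),(1,6)),10,[2,3,0,1,4,6,5,7,8,9]),(((0,4),(2,6)),13,[2,3,6,0,4,1,5,7,8,9]),(((0,4),(3,6)),13,[3,2,6,0,4,1,5,7,8,9]),(((0,4),(4,6)),9,[2,3,4,0,5,6,1,7,8,9]),(((0,4),(5,6)),10,[2,3,4,0,5,1,6,7,8,9]),(((1,4),(0,6)),10,[2,3,1,0,4,6,5,7,8,9]),(((1,4),(1,6)),9,[2,3,1,4,0,6,5,7,8,9]),(((1,4),(2,6)),13,[2,3,6,1,4,0,5,7,8,9]),(((1,4),(3,6)),13,[3,2,6,1,4,0,5,7,8,9]),(((1,4),(4,6)),9,[2,3,4,1,5,6,0,7,8,9]),(((1,4),(5,6)),10,[2,3,4,1,5,0,6,7,8,9]),(((2,4),(0,6)),13,[0,1,6,2,4,3,5,7,8,9]),(((2,4),(1,6)),13,[1,0,6,2,4,3,5,7,8,9]),(((2,4),(2,6)),9,[0,1,2,4,3,6,5,7,8,9]),(((2,4),(3,6)),10,[0,1,2,3,4,6,5,7,8,9]),(((2,4),(4,6)),9,[0,1,4,2,5,6,3,7,8,9]),(((2,4),(5,6)),10,[0,1,4,2,5,3,6,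7,8,9]),(((3,4),(0,6)),13,[0,1,6,3,4,2,5,7,8,9]),(((3,4),(1,6)),13,[1,0,6,3,4,2,5,7,8,9]),(((3,4),(2,6)),10,[0,1,3,2,4,6,5,7,8,9]),(((3,4),(3,6)),9,[0,1,3,4,2,6,5,7,8,9]),(((3,4),(4,6)),9,[0,1,4,3,5,6,2,7,8,9]),(((3,4),(5,6)),10,[0,1,4,3,5,2,6,7,8,9]),(((0,5),(0,6)),9,[2,3,0,5,1,6,4,7,8,9]),(((0,5),(1,6)),10,[2,3,0,1,5,6,4,7,8,9]),(((0,5),(2,6)),13,[2,3,6,0,5,1,4,7,8,9]),(((0,5),(3,6)),13,[3,2,6,0,5,1,4,7,8,9]),(((0,5),(4,6)),10,[2,3,5,0,4,1,6,7,8,9]),(((0,5),(5,6)),9,[2,3,5,0,4,6,1,7,8,9]),(((1,5),(0,6)),10,[2,3,1,0,5,6,4,7,8,9]),(((1,5),(1,6)),9,[2,3,1,5,0,6,4,7,8,9]),(((1,5),(2,6)),13,[2,3,6,1,5,0,4,7,8,9]),(((1,5),(3,6)),13,[3,2,6,1,5,0,4,7,8,9]),(((1,5),(4,6)),10,[2,3,5,1,4,0,6,7,8,9]),(((1,5),(5,6)),9,[2,3,5,1,4,6,0,7,8,9]),(((2,5),(0,6)),13,[0,1,6,2,5,3,4,7,8,9]),(((2,5),(1,6)),13,[1,0,6,2,5,3,4,7,8,9]),(((2,5),(2,6)),9,[0,1,2,5,3,6,4,7,8,9]),(((2,5),(3,6)),10,[0,1,2,3,5,6,4,7,8,9]),(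((2,5),(4,6)),10,[0,1,5,2,4,3,6,7,8,9]),(((2,5),(5,6)),9,[0,1,5,2,4,6,3,7,8,9]),(((3,5),(0,6)),13,[0,1,6,3,5,2,4,7,8,9]),(((3,5),(1,6)),13,[1,0,6,3,5,2,4,7,8,9]),(((3,5),(2,6)),10,[0,1,3,2,5,6,4,7,8,9]),(((3,5),(3,6)),9,[0,1,3,5,2,6,4,7,8,9]),(((3,5),(4,6)),10,[0,1,5,3,4,2,6,7,8,9]),(((3,5),(5,6)),9,[0,1,5,3,4,6,2,7,8,9]),(((0,6),(1,6)),2,[2,3,4,5,0,1,6,7,8,9]),(((0,6),(2,6)),10,[4,5,6,0,2,1,3,7,8,9]),(((0,6),(3,6)),10,[4,5,6,0,3,1,2,7,8,9]),(((0,6),(4,6)),10,[2,3,6,0,4,1,5,7,8,9]),(((0,6),(5,6)),10,[2,3,6,0,5,1,4,7,8,9]),(((1,6),(2,6)),10,[4,5,6,1,2,0,3,7,8,9]),(((1,6),(3,6)),10,[4,5,6,1,3,0,2,7,8,9]),(((1,6),(4,6)),10,[2,3,6,1,4,0,5,7,8,9]),(((1,6),(5,6)),10,[2,3,6,1,5,0,4,7,8,9]),(((2,6),(3,6)),2,[0,1,4,5,2,3,6,7,8,9]),(((2,6),(4,6)),10,[0,1,6,2,4,3,5,7,8,9]),(((2,6),(5,6)),10,[0,1,6,2,5,3,4,7,8,9]),(((3,6),(4,6)),10,[0,1,6,3,4,2,5,7,8,9]),(((3,6),(5,6)),10,[0,1,6,3,5,2,4,7,8,9]),(((4,6),(5,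6)),2,[0,1,2,3,4,5,6,7,8,9])]"

definition WK2 :: "(((nat\<times>nat)\<times>(nat\<times>nat))\<times>nat\<times>nat list) list" where "WK2 = [(((0,2),(6,7)),4,[4,5,6,7,0,2,1,3,8,9]),(((1,2),(6,7)),4,[4,5,6,7,1,2,0,3,8,9]),(((0,3),(6,7)),4,[4,5,6,7,0,3,1,2,8,9]),(((1,3),(6,7)),4,[4,5,6,7,1,3,0,2,8,9]),(((0,4),(6,7)),4,[2,3,6,7,0,4,1,5,8,9]),(((1,4),(6,7)),4,[2,3,6,7,1,4,0,5,8,9]),(((2,4),(6,7)),4,[0,1,6,7,2,4,3,5,8,9]),(((3,4),(6,7)),4,[0,1,6,7,3,4,2,5,8,9]),(((0,5),(6,7)),4,[2,3,6,7,0,5,1,4,8,9]),(((1,5),(6,7)),4,[2,3,6,7,1,5,0,4,8,9]),(((2,5),(6,7)),4,[0,1,6,7,2,5,3,4,8,9]),(((3,5),(6,7)),4,[0,1,6,7,3,5,2,4,8,9]),(((0,6),(0,7)),3,[2,3,4,5,0,1,6,7,8,9]),(((0,6),(1,7)),4,[2,3,4,5,0,1,6,7,8,9]),(((0,6),(2,7)),5,[4,5,0,1,6,2,3,7,8,9]),(((0,6),(3,7)),5,[4,5,0,1,6,3,2,7,8,9]),(((0,6),(4,7)),5,[2,3,0,1,6,4,5,7,8,9]),(((0,6),(5,7)),5,[2,3,0,1,6,5,4,7,8,9]),(((0,6),(6,7)),4,[2,3,4,5,0,6,1,7,8,9]),(((1,6),(0,7)),4,[2,3,4,5,0,1,7,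6,8,9]),(((1,6),(1,7)),3,[2,3,4,5,1,0,6,7,8,9]),(((1,6),(2,7)),5,[4,5,1,0,6,2,3,7,8,9]),(((1,6),(3,7)),5,[4,5,1,0,6,3,2,7,8,9]),(((1,6),(4,7)),5,[2,3,1,0,6,4,5,7,8,9]),(((1,6),(5,7)),5,[2,3,1,0,6,5,4,7,8,9]),(((1,6),(6,7)),4,[2,3,4,5,1,6,0,7,8,9]),(((2,6),(0,7)),5,[4,5,0,1,7,2,3,6,8,9]),(((2,6),(1,7)),5,[4,5,1,0,7,2,3,6,8,9]),(((2,6),(2,7)),3,[0,1,4,5,2,3,6,7,8,9]),(((2,6),(3,7)),4,[0,1,4,5,2,3,6,7,8,9]),(((2,6),(4,7)),5,[0,1,2,3,6,4,5,7,8,9]),(((2,6),(5,7)),5,[0,1,2,3,6,5,4,7,8,9]),(((2,6),(6,7)),4,[0,1,4,5,2,6,3,7,8,9]),(((3,6),(0,7)),5,[4,5,0,1,7,3,2,6,8,9]),(((3,6),(1,7)),5,[4,5,1,0,7,3,2,6,8,9]),(((3,6),(2,7)),4,[0,1,4,5,2,3,7,6,8,9]),(((3,6),(3,7)),3,[0,1,4,5,3,2,6,7,8,9]),(((3,6),(4,7)),5,[0,1,3,2,6,4,5,7,8,9]),(((3,6),(5,7)),5,[0,1,3,2,6,5,4,7,8,9]),(((3,6),(6,7)),4,[0,1,4,5,3,6,2,7,8,9]),(((4,6),(0,7)),5,[2,3,0,1,7,4,5,6,8,9]),(((4,6),(1,7)),5,[2,3,1,0,7,4,5,6,8,9]),(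((4,6),(2,7)),5,[0,1,2,3,7,4,5,6,8,9]),(((4,6),(3,7)),5,[0,1,3,2,7,4,5,6,8,9]),(((4,6),(4,7)),3,[0,1,2,3,4,5,6,7,8,9]),(((4,6),(5,7)),4,[0,1,2,3,4,5,6,7,8,9]),(((4,6),(6,7)),4,[0,1,2,3,4,6,5,7,8,9]),(((5,6),(0,7)),5,[2,3,0,1,7,5,4,6,8,9]),(((5,6),(1,7)),5,[2,3,1,0,7,5,4,6,8,9]),(((5,6),(2,7)),5,[0,1,2,3,7,5,4,6,8,9]),(((5,6),(3,7)),5,[0,1,3,2,7,5,4,6,8,9]),(((5,6),(4,7)),4,[0,1,2,3,4,5,7,6,8,9]),(((5,6),(5,7)),3,[0,1,2,3,5,4,6,7,8,9]),(((5,6),(6,7)),4,[0,1,2,3,5,6,4,7,8,9]),(((0,7),(6,7)),4,[2,3,4,5,0,7,1,6,8,9]),(((1,7),(6,7)),4,[2,3,4,5,1,7,0,6,8,9]),(((2,7),(6,7)),4,[0,1,4,5,2,7,3,6,8,9]),(((3,7),(6,7)),4,[0,1,4,5,3,7,2,6,8,9]),(((4,7),(6,7)),4,[0,1,2,3,4,7,5,6,8,9]),(((5,7),(6,7)),4,[0,1,2,3,5,7,4,6,8,9])]"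

definition WK3 :: "(((nat\<times>nat)\<times>(nat\<times>nat))\<times>nat\<times>nat list) list" where "WK3 = [(((0,6),(7,8)),1,[2,3,4,5,7,8,0,1,6,9]),(((1,6),(7,8)),1,[2,3,4,5,7,8,1,0,6,9]),(((2,6),(7,8)),1,[0,1,4,5,7,8,2,3,6,9]),(((3,6),(7,8)),1,[0,1,4,5,7,8,3,2,6,9]),(((4,6),(7,8)),1,[0,1,2,3,7,8,4,5,6,9]),(((5,6),(7,8)),1,[0,1,2,3,7,8,5,4,6,9]),(((0,7),(6,8)),1,[2,3,4,5,6,8,0,1,7,9]),(((1,7),(6,8)),1,[2,3,4,5,6,8,1,0,7,9]),(((2,7),(6,8)),1,[0,1,4,5,6,8,2,3,7,9]),(((3,7),(6,8)),1,[0,1,4,5,6,8,3,2,7,9]),(((4,7),(6,8)),1,[0,1,2,3,6,8,4,5,7,9]),(((5,7),(6,8)),1,[0,1,2,3,6,8,5,4,7,9]),(((6,7),(0,8)),1,[2,3,4,5,6,7,0,1,8,9]),(((6,7),(1,8)),1,[2,3,4,5,6,7,1,0,8,9]),(((6,7),(2,8)),1,[0,1,4,5,6,7,2,3,8,9]),(((6,7),(3,8)),1,[0,1,4,5,6,7,3,2,8,9]),(((6,7),(4,8)),1,[0,1,2,3,6,7,4,5,8,9]),(((6,7),(5,8)),1,[0,1,2,3,6,7,5,4,8,9]),(((6,7),(6,8)),1,[0,1,2,3,4,5,6,7,8,9]),(((6,7),(7,8)),1,[0,1,2,3,4,5,7,6,8,9]),(((6,8),(7,8)),1,[0,1,2,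3,4,5,8,6,7,9])]"

definition WK4 :: "(((nat\<times>nat)\<times>(nat\<times>nat))\<times>nat\<times>nat list) list" where "WK4 = [(((6,7),(8,9)),0,[0,1,2,3,4,5,6,7,8,9]),(((6,8),(7,9)),0,[0,1,2,3,4,5,6,8,7,9]),(((7,8),(6,9)),0,[0,1,2,3,4,5,6,9,7,8])]"

definition CNK :: "int list list" where "CNK = [[0,0,0,0,0,0,12,6,0,0,0,0,0,0,0,0,0,0,0,0,0,0,0,24,0,24],[0,0,3,0,0,0,0,0,0,24,36,0,0,24,0,0,0,0,0,0,0,0,0,0,0,0],[0,0,0,6,30,24,0,0,0,0,0,0,0,0,0,0,0,0,0,0,0,0,0,0,0,0],[0,21,0,0,0,0,0,0,0,0,0,0,0,0,0,0,0,0,0,0,0,0,0,0,0,0],[3,0,0,0,0,0,0,0,0,0,0,0,0,0,0,0,0,0,0,0,0,0,0,0,0,0]]"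

definition QK :: "int list list" where "QK = [[1474200,222918,12633,318,3],[1651104,183624,6804,84,0],[2016,72,0,0,0],[54432,3960,72,0,0],[272160,19800,360,0,0],[217728,15840,288,0,0],[288,0,0,0,0],[144,0,0,0,0],[0,0,0,0,0],[16128,576,0,0,0],[24192,864,0,0,0],[0,0,0,0,0],[0,0,0,0,0],[16128,576,0,0,0],[0,0,0,0,0],[0,0,0,0,0],[0,0,0,0,0],[0,0,0,0,0],[0,0,0,0,0],[0,0,0,0,0],[0,0,0,0,0],[0,0,0,0,0],[0,0,0,0,0],[576,0,0,0,0],[0,0,0,0,0],[576,0,0,0,0]]"

definition bpK :: "int list list" where "bpK = [[24],[672,24],[9072,660,12],[78624,8744,324,4],[491400,74306,4211,106,1]]"

lemma b24: "fact k * int (a choose k) = (\<Prod>i = 0..<k. int a - int i)"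
  by (simp add: int_binomial gbinomial_int_mult_fact)
lemma all_less5: "(\<forall>k<(5::nat). P k) \<longleftrightarrow> P 0 \<and> P 1 \<and> P 2 \<and> P 3 \<and> (P 4 :: bool)"
  by (auto simp: less_Suc_eq numeral_eq_Suc)
lemma bin_expl:
  fixes a :: nat
  shows "int (a choose 0) = 1" "int (a choose 1) = int a"
   "2 * int (a choose 2) = int a * (int a - 1)"
   "6 * int (a choose 3) = int a * (int a - 1) * (int a - 2)"
   "24 * int (a choose 4) = int a * (int a - 1) * (int a - 2) * (int a - 3)"
  using b24[of 2 a] b24[of 3 a] b24[of 4 a]
  by (simp_all add: numeral_eq_Suc prod.atLeast0_lessThan_Suc fact_numeral algebra_simps)

lemma repok_reps: "repok reps" by code_simp

lemma B_S:
  fixes n :: nat assumes "34 \<le> n"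
  shows "\<forall>k<5. 24 * int ((n - 4) choose k) = hv (bpS!k) (int n - 34)"
proof -
  have a: "int (n - 4) = int n - 4" using assms by simp
  show ?thesis unfolding all_less5 bpS_def
    using bin_expl[of "n-4"] unfolding a
    by (simp_all add: algebra_simps)
qed
lemma wfS0: "map fst WS0 = LL TS 4 0 \<and> list_all (wok reps TS) WS0 \<and> list_all (\<lambda>w. fst (snd w) < 26) WS0
  \<and> map (\<lambda>i. int (count_list (map (\<lambda>w. fst (snd w)) WS0) i)) [0..<26] = CNS!0"
  unfolding LL_fast by code_simp
lemma wfS1: "map fst WS1 = LL TS 4 1 \<and> list_all (wok reps TS) WS1 \<and> list_all (\<lambda>w. fst (snd w) < 26) WS1
  \<and> map (\<lambda>i. int (count_list (map (\<lambda>w. fst (snd w)) WS1) i)) [0..<26] = CNS!1"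
  unfolding LL_fast by code_simp
lemma wfS2: "map fst WS2 = LL TS 4 2 \<and> list_all (wok reps TS) WS2 \<and> list_all (\<lambda>w. fst (snd w) < 26) WS2
  \<and> map (\<lambda>i. int (count_list (map (\<lambda>w. fst (snd w)) WS2) i)) [0..<26] = CNS!2"
  unfolding LL_fast by code_simp
lemma wfS3: "map fst WS3 = LL TS 4 3 \<and> list_all (wok reps TS) WS3 \<and> list_all (\<lambda>w. fst (snd w) < 26) WS3
  \<and> map (\<lambda>i. int (count_list (map (\<lambda>w. fst (snd w)) WS3) i)) [0..<26] = CNS!3"
  unfolding LL_fast by code_simp
lemma wfS4: "map fst WS4 = LL TS 4 4 \<and> list_all (wok reps TS) WS4 \<and> list_all (\<lambda>w. fst (snd w) < 26) WS4
  \<and> map (\<lambda>i. int (count_list (map (\<lambda>w. fst (snd w)) WS4) i)) [0..<26] = CNS!4"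
  unfolding LL_fast by code_simp

lemma wf_S: "\<forall>k<5. map fst ([WS0,WS1,WS2,WS3,WS4]!k) = LL TS 4 k \<and> list_all (wok reps TS) ([WS0,WS1,WS2,WS3,WS4]!k)
   \<and> list_all (\<lambda>w. fst (snd w) < 26) ([WS0,WS1,WS2,WS3,WS4]!k)
   \<and> map (\<lambda>i. int (count_list (map (\<lambda>w. fst (snd w)) ([WS0,WS1,WS2,WS3,WS4]!k)) i)) [0..<26] = CNS!k"
  unfolding all_less5 using wfS0 wfS1 wfS2 wfS3 wfS4 by simp

lemma Q_S: "QS = map (\<lambda>i. vsum (map (\<lambda>k. map ((*) (CNS!k!i)) (bpS!k)) [0..<5])) [0..<26]"
  by code_simp

lemma TS_props: "normal TS" "gr TS \<subseteq> edges {0..<4}" "card (gr TS) = 3"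
proof -
  show n: "normal TS" by (simp add: normal_def TS_def)
  show "gr TS \<subseteq> edges {0..<4}" by (rule gr_sub[OF n]) (simp add: TS_def)
  show "card (gr TS) = 3" by (subst card_gr[OF n]) (simp_all add: TS_def)
qed

lemma formula_S:
  fixes n :: nat
  assumes Fsub: "F \<subseteq> {g. g \<subseteq> edges {0..<n} \<and> card g = 5}"
    and Finv: "\<forall>\<pi>. bij_betw \<pi> {0..<n} {0..<n} \<longrightarrow> (\<forall>g. g \<subseteq> edges {0..<n} \<longrightarrow> (img \<pi> g \<in> F \<longleftrightarrow> g \<in> F))"
    and n34: "34 \<le> n"
  shows "24 * int (card {g\<in>F. gr TS \<subseteq> g}) = (\<Sum>i<26. of_bool (gr (reps!i) \<in> F) * hv (QS!i) (int n - 34))"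
  by (rule T_formula[OF Fsub Finv n34 TS_props _ repok_reps wf_S B_S[OF n34] Q_S]) simp

lemma B_P:
  fixes n :: nat assumes "34 \<le> n"
  shows "\<forall>k<5. 24 * int ((n - 5) choose k) = hv (bpP!k) (int n - 34)"
proof -
  have a: "int (n - 5) = int n - 5" using assms by simp
  show ?thesis unfolding all_less5 bpP_def
    using bin_expl[of "n-5"] unfolding a
    by (simp_all add: algebra_simps)
qed
lemma wfP0: "map fst WP0 = LL TP 5 0 \<and> list_all (wok reps TP) WP0 \<and> list_all (\<lambda>w. fst (snd w) < 26) WP0
  \<and> map (\<lambda>i. int (count_list (map (\<lambda>w. fst (snd w)) WP0) i)) [0..<26] = CNP!0"
  unfolding LL_fast by code_simp
lemma wfP1: "map fst WP1 = LL TP 5 1 \<and> list_all (wok reps TP) WP1 \<and> list_all (\<lambda>w. fst (snd w) < 26) WP1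
  \<and> map (\<lambda>i. int (count_list (map (\<lambda>w. fst (snd w)) WP1) i)) [0..<26] = CNP!1"
  unfolding LL_fast by code_simp
lemma wfP2: "map fst WP2 = LL TP 5 2 \<and> list_all (wok reps TP) WP2 \<and> list_all (\<lambda>w. fst (snd w) < 26) WP2
  \<and> map (\<lambda>i. int (count_list (map (\<lambda>w. fst (snd w)) WP2) i)) [0..<26] = CNP!2"
  unfolding LL_fast by code_simp
lemma wfP3: "map fst WP3 = LL TP 5 3 \<and> list_all (wok reps TP) WP3 \<and> list_all (\<lambda>w. fst (snd w) < 26) WP3
  \<and> map (\<lambda>i. int (count_list (map (\<lambda>w. fst (snd w)) WP3) i)) [0..<26] = CNP!3"
  unfolding LL_fast by code_simp
lemma wfP4: "map fst WP4 = LL TP 5 4 \<and> list_all (wok reps TP) WP4 \<and> list_all (\<lambda>w. fst (snd w) < 26) WP4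
  \<and> map (\<lambda>i. int (count_list (map (\<lambda>w. fst (snd w)) WP4) i)) [0..<26] = CNP!4"
  unfolding LL_fast by code_simp

lemma wf_P: "\<forall>k<5. map fst ([WP0,WP1,WP2,WP3,WP4]!k) = LL TP 5 k \<and> list_all (wok reps TP) ([WP0,WP1,WP2,WP3,WP4]!k)
   \<and> list_all (\<lambda>w. fst (snd w) < 26) ([WP0,WP1,WP2,WP3,WP4]!k)
   \<and> map (\<lambda>i. int (count_list (map (\<lambda>w. fst (snd w)) ([WP0,WP1,WP2,WP3,WP4]!k)) i)) [0..<26] = CNP!k"
  unfolding all_less5 using wfP0 wfP1 wfP2 wfP3 wfP4 by simp

lemma Q_P: "QP = map (\<lambda>i. vsum (map (\<lambda>k. map ((*) (CNP!k!i)) (bpP!k)) [0..<5])) [0..<26]"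
  by code_simp

lemma TP_props: "normal TP" "gr TP \<subseteq> edges {0..<5}" "card (gr TP) = 3"
proof -
  show n: "normal TP" by (simp add: normal_def TP_def)
  show "gr TP \<subseteq> edges {0..<5}" by (rule gr_sub[OF n]) (simp add: TP_def)
  show "card (gr TP) = 3" by (subst card_gr[OF n]) (simp_all add: TP_def)
qed

lemma formula_P:
  fixes n :: nat
  assumes Fsub: "F \<subseteq> {g. g \<subseteq> edges {0..<n} \<and> card g = 5}"
    and Finv: "\<forall>\<pi>. bij_betw \<pi> {0..<n} {0..<n} \<longrightarrow> (\<forall>g. g \<subseteq> edges {0..<n} \<longrightarrow> (img \<pi> g \<in> F \<longleftrightarrow> g \<in> F))"
    and n34: "34 \<le> n"
  shows "24 * int (card {g\<in>F. gr TP \<subseteq> g}) = (\<Sum>i<26. of_bool (gr (reps!i) \<in> F) * hv (QP!i) (int n - 34))"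
  by (rule T_formula[OF Fsub Finv n34 TP_props _ repok_reps wf_P B_P[OF n34] Q_P]) simp

lemma B_K:
  fixes n :: nat assumes "34 \<le> n"
  shows "\<forall>k<5. 24 * int ((n - 6) choose k) = hv (bpK!k) (int n - 34)"
proof -
  have a: "int (n - 6) = int n - 6" using assms by simp
  show ?thesis unfolding all_less5 bpK_def
    using bin_expl[of "n-6"] unfolding a
    by (simp_all add: algebra_simps)
qed
lemma wfK0: "map fst WK0 = LL TK 6 0 \<and> list_all (wok reps TK) WK0 \<and> list_all (\<lambda>w. fst (snd w) < 26) WK0
  \<and> map (\<lambda>i. int (count_list (map (\<lambda>w. fst (snd w)) WK0) i)) [0..<26] = CNK!0"
  unfolding LL_fast by code_simp
lemma wfK1: "map fst WK1 = LL TK 6 1 \<and> list_all (wok reps TK) WK1 \<and> list_all (\<lambda>w. fst (snd w) < 26) WK1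
  \<and> map (\<lambda>i. int (count_list (map (\<lambda>w. fst (snd w)) WK1) i)) [0..<26] = CNK!1"
  unfolding LL_fast by code_simp
lemma wfK2: "map fst WK2 = LL TK 6 2 \<and> list_all (wok reps TK) WK2 \<and> list_all (\<lambda>w. fst (snd w) < 26) WK2
  \<and> map (\<lambda>i. int (count_list (map (\<lambda>w. fst (snd w)) WK2) i)) [0..<26] = CNK!2"
  unfolding LL_fast by code_simp
lemma wfK3: "map fst WK3 = LL TK 6 3 \<and> list_all (wok reps TK) WK3 \<and> list_all (\<lambda>w. fst (snd w) < 26) WK3
  \<and> map (\<lambda>i. int (count_list (map (\<lambda>w. fst (snd w)) WK3) i)) [0..<26] = CNK!3"
  unfolding LL_fast by code_simp
lemma wfK4: "map fst WK4 = LL TK 6 4 \<and> list_all (wok reps TK) WK4 \<and> list_all (\<lambda>w. fst (snd w) < 26) WK4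
  \<and> map (\<lambda>i. int (count_list (map (\<lambda>w. fst (snd w)) WK4) i)) [0..<26] = CNK!4"
  unfolding LL_fast by code_simp

lemma wf_K: "\<forall>k<5. map fst ([WK0,WK1,WK2,WK3,WK4]!k) = LL TK 6 k \<and> list_all (wok reps TK) ([WK0,WK1,WK2,WK3,WK4]!k)
   \<and> list_all (\<lambda>w. fst (snd w) < 26) ([WK0,WK1,WK2,WK3,WK4]!k)
   \<and> map (\<lambda>i. int (count_list (map (\<lambda>w. fst (snd w)) ([WK0,WK1,WK2,WK3,WK4]!k)) i)) [0..<26] = CNK!k"
  unfolding all_less5 using wfK0 wfK1 wfK2 wfK3 wfK4 by simp

lemma Q_K: "QK = map (\<lambda>i. vsum (map (\<lambda>k. map ((*) (CNK!k!i)) (bpK!k)) [0..<5])) [0..<26]"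
  by code_simp

lemma TK_props: "normal TK" "gr TK \<subseteq> edges {0..<6}" "card (gr TK) = 3"
proof -
  show n: "normal TK" by (simp add: normal_def TK_def)
  show "gr TK \<subseteq> edges {0..<6}" by (rule gr_sub[OF n]) (simp add: TK_def)
  show "card (gr TK) = 3" by (subst card_gr[OF n]) (simp_all add: TK_def)
qed

lemma formula_K:
  fixes n :: nat
  assumes Fsub: "F \<subseteq> {g. g \<subseteq> edges {0..<n} \<and> card g = 5}"
    and Finv: "\<forall>\<pi>. bij_betw \<pi> {0..<n} {0..<n} \<longrightarrow> (\<forall>g. g \<subseteq> edges {0..<n} \<longrightarrow> (img \<pi> g \<in> F \<longleftrightarrow> g \<in> F))"
    and n34: "34 \<le> n"
  shows "24 * int (card {g\<in>F. gr TK \<subseteq> g}) = (\<Sum>i<26. of_bool (gr (reps!i) \<in> F) * hv (QK!i) (int n - 34))"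
  by (rule T_formula[OF Fsub Finv n34 TK_props _ repok_reps wf_K B_K[OF n34] Q_K]) simp
lemma ck0: "check_step (dd QP QK) [0] 1" by code_simp
lemma ck1: "check_step (dd QP QK) [0,1] 2" by code_simp
lemma ck2: "check_step (dd QS QP) [0,1,2] 3" by code_simp
lemma ck3: "check_step (dd QP QK) [0,1,2,3] 4" by code_simp
lemma ck4: "check_step (dd QP QK) [0,1,2,3,4] 5" by code_simp
lemma ck5: "check_step (dd QP QK) [0,1,2,3,4,5] 6" by code_simp
lemma ck6: "check_step (dd QP QK) [0,1,2,3,4,5,6] 7" by code_simp
lemma ck7: "check_step (dd QS QP) [0,1,2,3,4,5,6,7] 8" by code_simp
lemma ck8: "check_step (dd QS QP) [0,1,2,3,4,5,6,7,8] 9" by code_simp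
lemma ck9: "check_step (dd QP QK) [0,1,2,3,4,5,6,7,8,9] 10" by code_simp
lemma ck10: "check_step (dd QP QK) [0,1,2,3,4,5,6,7,8,9,10] 11" by code_simp
lemma ck11: "check_step (dd QS QP) [0,1,2,3,4,5,6,7,8,9,10,11] 12" by code_simp
lemma ck12: "check_step (dd QP QK) [0,1,2,3,4,5,6,7,8,9,10,11,12] 13" by code_simp
lemma ck13: "check_step (dd QS QK) [0,1,2,3,4,5,6,7,8,9,10,11,12,13] 15" by code_simp
lemma ck14: "check_step (dd QS QK) [0,1,2,3,4,5,6,7,8,9,10,11,12,13,15] 16" by code_simp
lemma ck15: "check_step (dd QS QK) [0,1,2,3,4,5,6,7,8,9,10,11,12,13,15,16] 17" by code_simp
lemma ck16: "check_step (dd QS QK) [0,1,2,3,4,5,6,7,8,9,10,11,12,13,15,16,17] 18" by code_simp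
lemma ck17: "check_step (dd QP QK) [0,1,2,3,4,5,6,7,8,9,10,11,12,13,15,16,17,18] 19" by code_simp
lemma ck18: "check_step (dd QS QP) [0,1,2,3,4,5,6,7,8,9,10,11,12,13,15,16,17,18,19] 20" by code_simp
lemma ck19: "check_step (dd QS QP) [0,1,2,3,4,5,6,7,8,9,10,11,12,13,15,16,17,18,19,20] 21" by code_simp
lemma ck20: "check_step (dd QS QP) [0,1,2,3,4,5,6,7,8,9,10,11,12,13,15,16,17,18,19,20,21] 22" by code_simp
lemma ck21: "check_step (dd QS QP) [0,1,2,3,4,5,6,7,8,9,10,11,12,13,15,16,17,18,19,20,21,22] 23" by code_simp
lemma ck22: "check_step (dd QS QP) [0,1,2,3,4,5,6,7,8,9,10,11,12,13,15,16,17,18,19,20,21,22,23] 24" by code_simp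
lemma ck23: "check_step (dd QS QP) [0,1,2,3,4,5,6,7,8,9,10,11,12,13,15,16,17,18,19,20,21,22,23,24] 25" by code_simp
lemma ck24: "check_step (dd QS QP) [0,1,2,3,4,5,6,7,8,9,10,11,12,13,15,16,17,18,19,20,21,22,23,24,25] 14" by code_simp


lemma x01_lemma: "\<forall>i. (of_bool (P i) :: int) = 0 \<or> of_bool (P i) = 1" by simp

theorem nat_main:
  fixes n lam :: nat and F :: "nat set set set"
  assumes n34: "34 \<le> n"
    and Fsub: "F \<subseteq> {g. g \<subseteq> edges {0..<n} \<and> card g = 5}"
    and Finv: "\<forall>\<pi>. bij_betw \<pi> {0..<n} {0..<n} \<longrightarrow> (\<forall>g. g \<subseteq> edges {0..<n} \<longrightarrow> (img \<pi> g \<in> F \<longleftrightarrow> g \<in> F))"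
    and Fdes: "\<forall>T. T \<subseteq> edges {0..<n} \<and> card T = 3 \<longrightarrow> card {g\<in>F. T \<subseteq> g} = lam"
    and lam: "lam > 0"
  shows "F = {g. g \<subseteq> edges {0..<n} \<and> card g = 5}"
proof -
  define x where "x i = (of_bool (gr (reps!i) \<in> F) :: int)" for i
  define m where "m = int n - 34"
  have m0: "m \<ge> 0" using n34 by (simp add: m_def)
  have x01: "\<forall>i. x i = 0 \<or> x i = 1" unfolding x_def by (rule x01_lemma)
  have TE: "gr TS \<subseteq> edges {0..<n}" "gr TP \<subseteq> edges {0..<n}" "gr TK \<subseteq> edges {0..<n}"
    using TS_props(2) TP_props(2) TK_props(2) edges_mono[of "{0..<4}" "{0..<n}"] edges_mono[of "{0..<5}" "{0..<n}"]
      edges_mono[of "{0..<6}" "{0..<n}"] n34 by auto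
  have lS: "card {g\<in>F. gr TS \<subseteq> g} = lam" using Fdes TE(1) TS_props(3) by blast
  have lP: "card {g\<in>F. gr TP \<subseteq> g} = lam" using Fdes TE(2) TP_props(3) by blast
  have lK: "card {g\<in>F. gr TK \<subseteq> g} = lam" using Fdes TE(3) TK_props(3) by blast
  have fS: "24 * int lam = (\<Sum>i<26. x i * hv (QS!i) m)" using formula_S[OF Fsub Finv n34] lS by (simp add: x_def m_def)
  have fP: "24 * int lam = (\<Sum>i<26. x i * hv (QP!i) m)" using formula_P[OF Fsub Finv n34] lP by (simp add: x_def m_def)
  have fK: "24 * int lam = (\<Sum>i<26. x i * hv (QK!i) m)" using formula_K[OF Fsub Finv n34] lK by (simp add: x_def m_def)
  have len: "length QS = 26" "length QP = 26" "length QK = 26" by (simp_all add: QS_def QP_def QK_def)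
  have dSP: "(\<Sum>i<26. x i * hv (dd QS QP ! i) m) = 0" using dd_sum[OF len(1,2)] fS fP by simp
  have dSK: "(\<Sum>i<26. x i * hv (dd QS QK ! i) m) = 0" using dd_sum[OF len(1,3)] fS fK by simp
  have dPK: "(\<Sum>i<26. x i * hv (dd QP QK ! i) m) = 0" using dd_sum[OF len(2,3)] fP fK by simp
  have s1: "x 1 = x 0" using cascade_step[OF ck0 m0 x01 _ dPK] by (simp add: )
  have s2: "x 2 = x 0" using cascade_step[OF ck1 m0 x01 _ dPK] by (simp add: s1 s1[unfolded One_nat_def])
  have s3: "x 3 = x 0" using cascade_step[OF ck2 m0 x01 _ dSP] by (simp add: s1 s1[unfolded One_nat_def] s2)
  have s4: "x 4 = x 0" using cascade_step[OF ck3 m0 x01 _ dPK] by (simp add: s1 s1[unfolded One_nat_def] s2 s3)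
  have s5: "x 5 = x 0" using cascade_step[OF ck4 m0 x01 _ dPK] by (simp add: s1 s1[unfolded One_nat_def] s2 s3 s4)
  have s6: "x 6 = x 0" using cascade_step[OF ck5 m0 x01 _ dPK] by (simp add: s1 s1[unfolded One_nat_def] s2 s3 s4 s5)
  have s7: "x 7 = x 0" using cascade_step[OF ck6 m0 x01 _ dPK] by (simp add: s1 s1[unfolded One_nat_def] s2 s3 s4 s5 s6)
  have s8: "x 8 = x 0" using cascade_step[OF ck7 m0 x01 _ dSP] by (simp add: s1 s1[unfolded One_nat_def] s2 s3 s4 s5 s6 s7)
  have s9: "x 9 = x 0" using cascade_step[OF ck8 m0 x01 _ dSP] by (simp add: s1 s1[unfolded One_nat_def] s2 s3 s4 s5 s6 s7 s8)
  have s10: "x 10 = x 0" using cascade_step[OF ck9 m0 x01 _ dPK] by (simp add: s1 s1[unfolded One_nat_def] s2 s3 s4 s5 s6 s7 s8 s9)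
  have s11: "x 11 = x 0" using cascade_step[OF ck10 m0 x01 _ dPK] by (simp add: s1 s1[unfolded One_nat_def] s2 s3 s4 s5 s6 s7 s8 s9 s10)
  have s12: "x 12 = x 0" using cascade_step[OF ck11 m0 x01 _ dSP] by (simp add: s1 s1[unfolded One_nat_def] s2 s3 s4 s5 s6 s7 s8 s9 s10 s11)
  have s13: "x 13 = x 0" using cascade_step[OF ck12 m0 x01 _ dPK] by (simp add: s1 s1[unfolded One_nat_def] s2 s3 s4 s5 s6 s7 s8 s9 s10 s11 s12)
  have s15: "x 15 = x 0" using cascade_step[OF ck13 m0 x01 _ dSK] by (simp add: s1 s1[unfolded One_nat_def] s2 s3 s4 s5 s6 s7 s8 s9 s10 s11 s12 s13)
  have s16: "x 16 = x 0" using cascade_step[OF ck14 m0 x01 _ dSK] by (simp add: s1 s1[unfolded One_nat_def] s2 s3 s4 s5 s6 s7 s8 s9 s10 s11 s12 s13 s15)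
  have s17: "x 17 = x 0" using cascade_step[OF ck15 m0 x01 _ dSK] by (simp add: s1 s1[unfolded One_nat_def] s2 s3 s4 s5 s6 s7 s8 s9 s10 s11 s12 s13 s15 s16)
  have s18: "x 18 = x 0" using cascade_step[OF ck16 m0 x01 _ dSK] by (simp add: s1 s1[unfolded One_nat_def] s2 s3 s4 s5 s6 s7 s8 s9 s10 s11 s12 s13 s15 s16 s17)
  have s19: "x 19 = x 0" using cascade_step[OF ck17 m0 x01 _ dPK] by (simp add: s1 s1[unfolded One_nat_def] s2 s3 s4 s5 s6 s7 s8 s9 s10 s11 s12 s13 s15 s16 s17 s18)
  have s20: "x 20 = x 0" using cascade_step[OF ck18 m0 x01 _ dSP] by (simp add: s1 s1[unfolded One_nat_def] s2 s3 s4 s5 s6 s7 s8 s9 s10 s11 s12 s13 s15 s16 s17 s18 s19)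
  have s21: "x 21 = x 0" using cascade_step[OF ck19 m0 x01 _ dSP] by (simp add: s1 s1[unfolded One_nat_def] s2 s3 s4 s5 s6 s7 s8 s9 s10 s11 s12 s13 s15 s16 s17 s18 s19 s20)
  have s22: "x 22 = x 0" using cascade_step[OF ck20 m0 x01 _ dSP] by (simp add: s1 s1[unfolded One_nat_def] s2 s3 s4 s5 s6 s7 s8 s9 s10 s11 s12 s13 s15 s16 s17 s18 s19 s20 s21)
  have s23: "x 23 = x 0" using cascade_step[OF ck21 m0 x01 _ dSP] by (simp add: s1 s1[unfolded One_nat_def] s2 s3 s4 s5 s6 s7 s8 s9 s10 s11 s12 s13 s15 s16 s17 s18 s19 s20 s21 s22)
  have s24: "x 24 = x 0" using cascade_step[OF ck22 m0 x01 _ dSP] by (simp add: s1 s1[unfolded One_nat_def] s2 s3 s4 s5 s6 s7 s8 s9 s10 s11 s12 s13 s15 s16 s17 s18 s19 s20 s21 s22 s23)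
  have s25: "x 25 = x 0" using cascade_step[OF ck23 m0 x01 _ dSP] by (simp add: s1 s1[unfolded One_nat_def] s2 s3 s4 s5 s6 s7 s8 s9 s10 s11 s12 s13 s15 s16 s17 s18 s19 s20 s21 s22 s23 s24)
  have s14: "x 14 = x 0" using cascade_step[OF ck24 m0 x01 _ dSP] by (simp add: s1 s1[unfolded One_nat_def] s2 s3 s4 s5 s6 s7 s8 s9 s10 s11 s12 s13 s15 s16 s17 s18 s19 s20 s21 s22 s23 s24 s25)
  have allx: "\<forall>i<26. x i = x 0"
  proof (intro allI impI)
    fix i :: nat assume "i < 26"
    then have "i = 0 \<or> i = 1 \<or> i = 2 \<or> i = 3 \<or> i = 4 \<or> i = 5 \<or> i = 6 \<or> i = 7 \<or> i = 8 \<or> i = 9 \<or> i = 10 \<or> i = 11 \<or> i = 12 \<or> i = 13 \<or> i = 14 \<or> i = 15 \<or> i = 16 \<or> i = 17 \<or> i = 18 \<or> i = 19 \<or> i = 20 \<or> i = 21 \<or> i = 22 \<or> i = 23 \<or> i = 24 \<or> i = 25" by presburger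
    then show "x i = x 0" using s1 s2 s3 s4 s5 s6 s7 s8 s9 s10 s11 s12 s13 s15 s16 s17 s18 s19 s20 s21 s22 s23 s24 s25 s14 by auto
  qed
  show ?thesis
  proof (cases "x 0 = 0")
    case True
    have "\<forall>i\<in>{..<26}. x i * hv (QS!i) m = 0" using allx True by simp
    then have "(\<Sum>i<26. x i * hv (QS!i) m) = 0" by (rule sum.neutral)
    then have "24 * int lam = 0" using fS by simp
    then show ?thesis using lam by simp
  next
    case False
    then have x1: "\<forall>i<26. x i = 1" using allx x01 by metis
    let ?A = "{g. g \<subseteq> edges {0..<n} \<and> card g = 5}"
    have Ainv: "\<forall>\<pi>. bij_betw \<pi> {0..<n} {0..<n} \<longrightarrow> (\<forall>g. g \<subseteq> edges {0..<n} \<longrightarrow> (img \<pi> g \<in> ?A \<longleftrightarrow> g \<in> ?A))"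
      using All_inv by blast
    have xa: "\<forall>i<26. of_bool (gr (reps!i) \<in> ?A) = (1::int)"
    proof (intro allI impI)
      fix i :: nat assume i: "i < 26"
      have r: "normal (reps!i) \<and> distinct (reps!i) \<and> length (reps!i) = 5 \<and> list_all (\<lambda>e. snd e < 10) (reps!i)"
      proof -
        have "list_all (\<lambda>r. normal r \<and> distinct r \<and> length r = 5 \<and> list_all (\<lambda>e. snd e < 10) r) reps"
          by (simp add: reps_def normal_def)
        moreover have "length reps = 26" by (simp add: reps_def)
        ultimately show ?thesis using i by (simp add: list_all_length)
      qed
      have "list_all (\<lambda>e. snd e < n) (reps!i)" using r n34 by (auto simp: list_all_iff)
      then have "gr (reps!i) \<subseteq> edges {0..<n}" using gr_sub r by blast
      moreover have "card (gr (reps!i)) = 5" using card_gr r by simp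
      ultimately show "of_bool (gr (reps!i) \<in> ?A) = (1::int)" by simp
    qed
    have "24 * int (card {g\<in>?A. gr TS \<subseteq> g}) = (\<Sum>i<26. of_bool (gr (reps!i) \<in> ?A) * hv (QS!i) (int n - 34))"
      by (rule formula_S[OF _ Ainv n34]) simp
    also have "\<dots> = (\<Sum>i<26. x i * hv (QS!i) m)" using xa x1 by (simp add: m_def)
    finally have cA: "card {g\<in>?A. gr TS \<subseteq> g} = lam" using fS by simp
    have cN: "card {g\<in>?A. gr TS \<subseteq> g} = (card (edges {0..<n}) - 3) choose 2"
      using All_count[OF TE(1) TS_props(3)] .
    show ?thesis
    proof
      show "F \<subseteq> ?A" by (rule Fsub)
      show "?A \<subseteq> F"
      proof
        fix g assume g: "g \<in> ?A"
        have "card g = 5" using g by simp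
        then have "3 \<le> card g" by simp
        then obtain T where T: "T \<subseteq> g" "card T = 3" by (rule obtain_subset_with_card_n)
        have TE': "T \<subseteq> edges {0..<n}" using T g by auto
        have f1: "card {g\<in>F. T \<subseteq> g} = lam" using Fdes TE' T(2) by blast
        have f2: "card {g\<in>?A. T \<subseteq> g} = lam" using All_count[OF TE' T(2)] cN cA by simp
        have sub: "{g\<in>F. T \<subseteq> g} \<subseteq> {g\<in>?A. T \<subseteq> g}" using Fsub by blast
        have fin: "finite {g\<in>?A. T \<subseteq> g}"
          by (rule finite_subset[of _ "Pow (edges {0..<n})"]) (auto simp: finite_edges)
        have "{g\<in>F. T \<subseteq> g} = {g\<in>?A. T \<subseteq> g}" using card_subset_eq[OF fin sub] f1 f2 by simp
        then show "g \<in> F" using g T by blast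
      qed
    qed
  qed
qed


lemma img_sub:
  fixes n :: nat
  assumes \<pi>: "bij_betw \<pi> {0..<n} {0..<n}" and g: "g \<subseteq> edges {0..<n}"
  shows "img \<pi> g \<subseteq> edges {0..<n}"
proof
  have injs: "inj_on \<pi> {0..<n}" using \<pi> by (auto simp: bij_betw_def)
  fix e' assume "e' \<in> img \<pi> g"
  then obtain e where e: "e \<in> g" "e' = \<pi> ` e" by (auto simp: img_def)
  then have "e \<subseteq> {0..<n}" "card e = 2" using g by (auto simp: edges_def subsets_of_card_def)
  moreover have "inj_on \<pi> e" using injs \<open>e \<subseteq> {0..<n}\<close> inj_on_subset by blast
  moreover have "\<pi> ` e \<subseteq> {0..<n}" using \<pi> \<open>e \<subseteq> {0..<n}\<close> by (auto simp: bij_betw_def)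
  ultimately show "e' \<in> edges {0..<n}" using e by (simp add: edges_def subsets_of_card_def card_image)
qed

lemma image_edges_bij:
  assumes \<iota>: "bij_betw \<iota> A V"
  shows "bij_betw (image \<iota>) (edges A) (edges V)"
proof -
  have inj: "inj_on \<iota> A" and im: "\<iota> ` A = V" using \<iota> by (auto simp: bij_betw_def)
  have injE: "inj_on (image \<iota>) (edges A)"
    by (rule inj_on_subset[OF inj_on_image_Pow[OF inj]]) (auto simp: edges_def subsets_of_card_def)
  have "image \<iota> ` edges A = edges V"
  proof
    show "image \<iota> ` edges A \<subseteq> edges V"
    proof
      fix f assume "f \<in> image \<iota> ` edges A"
      then obtain e where e: "e \<in> edges A" "f = \<iota> ` e" by auto
      then have "e \<subseteq> A" "card e = 2" by (auto simp: edges_def subsets_of_card_def)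
      moreover have "inj_on \<iota> e" using inj \<open>e \<subseteq> A\<close> inj_on_subset by blast
      ultimately show "f \<in> edges V" using e im by (auto simp: edges_def subsets_of_card_def card_image)
    qed
    show "edges V \<subseteq> image \<iota> ` edges A"
    proof
      fix f assume f: "f \<in> edges V"
      then have fV: "f \<subseteq> V" and cf: "card f = 2" by (auto simp: edges_def subsets_of_card_def)
      define e where "e = inv_into A \<iota> ` f"
      have fe: "\<iota> ` e = f" unfolding e_def by (rule image_inv_into_cancel[OF im fV])
      have eA: "e \<subseteq> A" unfolding e_def using fV im by (auto intro: inv_into_into)
      have "inj_on (inv_into A \<iota>) f" by (rule inj_on_inv_into) (use fV im in auto)
      then have "card e = 2" unfolding e_def using cf by (simp add: card_image)
      then have "e \<in> edges A" using eA by (simp add: edges_def subsets_of_card_def)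
      then show "f \<in> image \<iota> ` edges A" using fe by blast
    qed
  qed
  then show ?thesis using injE by (simp add: bij_betw_def)
qed

theorem mainTheorem2:
  fixes n lam :: nat and V :: "'b set" and phi :: "'b set \<Rightarrow> 'a" and X :: "'a set" and B :: "'a set set"
  assumes "n \<ge> 34" and "lam > 0"
  shows "\<not> (is_design X B 3 (n choose 2) 5 lam \<and> graphical_wrt n V phi X B)"
proof
  assume H: "is_design X B 3 (n choose 2) 5 lam \<and> graphical_wrt n V phi X B"
  have finV: "finite V" and cV: "card V = n" and bphi: "bij_betw phi (edges V) X"
    and aut: "\<forall>\<sigma>. bij_betw \<sigma> V V \<longrightarrow> is_automorphism X B (\<lambda>x. phi (\<sigma> ` (inv_into (edges V) phi x)))"
    using H by (auto simp: graphical_wrt_def)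
  have Bsub: "B \<subseteq> subsets_of_card X 5" and des: "\<forall>T \<in> subsets_of_card X 3. card {b \<in> B. T \<subseteq> b} = lam"
    and Bne: "B \<noteq> subsets_of_card X 5"
    using H by (auto simp: is_design_def)
  obtain \<iota> where \<iota>: "bij_betw \<iota> {0..<n} V" using ex_bij_betw_nat_finite[OF finV] cV by auto
  define \<epsilon> where "\<epsilon> e = phi (\<iota> ` e)" for e
  have bI: "bij_betw (image \<iota>) (edges {0..<n}) (edges V)" by (rule image_edges_bij[OF \<iota>])
  have bE: "bij_betw \<epsilon> (edges {0..<n}) X"
  proof -
    have "bij_betw (phi \<circ> image \<iota>) (edges {0..<n}) X" by (rule bij_betw_trans[OF bI bphi])
    then show ?thesis by (simp add: \<epsilon>_def[abs_def] o_def)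
  qed
  have injE: "inj_on \<epsilon> (edges {0..<n})" and imE: "\<epsilon> ` edges {0..<n} = X" using bE by (auto simp: bij_betw_def)
  have injP: "inj_on (image \<epsilon>) (Pow (edges {0..<n}))" by (rule inj_on_image_Pow[OF injE])
  have pre: "\<exists>g. g \<subseteq> edges {0..<n} \<and> \<epsilon> ` g = b \<and> card g = card b" if b: "b \<subseteq> X" for b
  proof -
    define g where "g = inv_into (edges {0..<n}) \<epsilon> ` b"
    have "\<epsilon> ` g = b" unfolding g_def by (rule image_inv_into_cancel[OF imE b])
    moreover have "g \<subseteq> edges {0..<n}" unfolding g_def using b imE by (auto intro: inv_into_into)
    moreover have "inj_on (inv_into (edges {0..<n}) \<epsilon>) b" by (rule inj_on_inv_into) (use b imE in auto)
    then have "card g = card b" unfolding g_def by (simp add: card_image)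
    ultimately show ?thesis by blast
  qed
  define F where "F = {g. g \<subseteq> edges {0..<n} \<and> \<epsilon> ` g \<in> B}"
  have cardE: "card (\<epsilon> ` g) = card g" if "g \<subseteq> edges {0..<n}" for g
    using card_image[OF inj_on_subset[OF injE that]] .
  have Fsub: "F \<subseteq> {g. g \<subseteq> edges {0..<n} \<and> card g = 5}"
  proof
    fix g assume "g \<in> F"
    then have g: "g \<subseteq> edges {0..<n}" "\<epsilon> ` g \<in> B" by (auto simp: F_def)
    then have "card (\<epsilon> ` g) = 5" using Bsub by (auto simp: subsets_of_card_def)
    then show "g \<in> {g. g \<subseteq> edges {0..<n} \<and> card g = 5}" using g cardE by simp
  qed
  have Fdes: "\<forall>T. T \<subseteq> edges {0..<n} \<and> card T = 3 \<longrightarrow> card {g\<in>F. T \<subseteq> g} = lam"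
  proof (intro allI impI)
    fix T assume T: "T \<subseteq> edges {0..<n} \<and> card T = 3"
    have "\<epsilon> ` T \<in> subsets_of_card X 3" using T imE cardE by (auto simp: subsets_of_card_def)
    then have l: "card {b \<in> B. \<epsilon> ` T \<subseteq> b} = lam" using des by blast
    have "image \<epsilon> ` {g\<in>F. T \<subseteq> g} = {b \<in> B. \<epsilon> ` T \<subseteq> b}"
    proof
      show "image \<epsilon> ` {g\<in>F. T \<subseteq> g} \<subseteq> {b \<in> B. \<epsilon> ` T \<subseteq> b}" by (auto simp: F_def)
      show "{b \<in> B. \<epsilon> ` T \<subseteq> b} \<subseteq> image \<epsilon> ` {g\<in>F. T \<subseteq> g}"
      proof
        fix b assume b: "b \<in> {b \<in> B. \<epsilon> ` T \<subseteq> b}"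
        then have bX: "b \<subseteq> X" using Bsub by (auto simp: subsets_of_card_def)
        obtain g where g: "g \<subseteq> edges {0..<n}" "\<epsilon> ` g = b" using pre[OF bX] by blast
        have "T \<subseteq> g"
        proof
          fix e assume e: "e \<in> T"
          then have "\<epsilon> e \<in> \<epsilon> ` g" using b g by auto
          then obtain e' where "e' \<in> g" "\<epsilon> e = \<epsilon> e'" by auto
          then have "e = e'" using inj_onD[OF injE] e T g by blast
          then show "e \<in> g" using \<open>e' \<in> g\<close> by simp
        qed
        then show "b \<in> image \<epsilon> ` {g\<in>F. T \<subseteq> g}" using g b by (auto simp: F_def)
      qed
    qed
    moreover have "inj_on (image \<epsilon>) {g\<in>F. T \<subseteq> g}" by (rule inj_on_subset[OF injP]) (auto simp: F_def)
    ultimately show "card {g\<in>F. T \<subseteq> g} = lam" using l card_image by metis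
  qed
  have Finv: "\<forall>\<pi>. bij_betw \<pi> {0..<n} {0..<n} \<longrightarrow> (\<forall>g. g \<subseteq> edges {0..<n} \<longrightarrow> (img \<pi> g \<in> F \<longleftrightarrow> g \<in> F))"
  proof (intro allI impI)
    fix \<pi> g assume \<pi>: "bij_betw \<pi> {0..<n} {0..<n}" and g: "g \<subseteq> edges {0..<n}"
    define \<sigma> where "\<sigma> = \<iota> \<circ> (\<pi> \<circ> inv_into {0..<n} \<iota>)"
    have b\<sigma>: "bij_betw \<sigma> V V" unfolding \<sigma>_def
      by (rule bij_betw_trans[OF bij_betw_trans[OF bij_betw_inv_into[OF \<iota>] \<pi>] \<iota>])
    define f where "f x = phi (\<sigma> ` (inv_into (edges V) phi x))" for x
    have af: "is_automorphism X B f" using aut b\<sigma> by (simp add: f_def[abs_def])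
    then have bf: "bij_betw f X X" and fB: "(\<lambda>b. f ` b) ` B = B" by (auto simp: is_automorphism_def)
    have injphi: "inj_on phi (edges V)" using bphi by (simp add: bij_betw_def)
    have inji: "inj_on \<iota> {0..<n}" using \<iota> by (simp add: bij_betw_def)
    have fe: "f (\<epsilon> e) = \<epsilon> (\<pi> ` e)" if e: "e \<in> edges {0..<n}" for e
    proof -
      have ie: "\<iota> ` e \<in> edges V" using bI e by (auto simp: bij_betw_def)
      have e0: "e \<subseteq> {0..<n}" using e by (auto simp: edges_def subsets_of_card_def)
      have "\<sigma> ` (\<iota> ` e) = \<iota> ` (\<pi> ` e)"
      proof -
        have "\<And>x. x \<in> e \<Longrightarrow> \<sigma> (\<iota> x) = \<iota> (\<pi> x)" using e0 inji by (auto simp: \<sigma>_def)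
        then show ?thesis by (auto simp: image_iff)
      qed
      then show ?thesis unfolding f_def \<epsilon>_def using inv_into_f_f[OF injphi ie] by simp
    qed
    have fimg: "f ` (\<epsilon> ` g) = \<epsilon> ` (img \<pi> g)"
    proof -
      have "f ` (\<epsilon> ` g) = (\<lambda>e. \<epsilon> (\<pi> ` e)) ` g" using fe g by (force simp: image_iff)
      then show ?thesis by (auto simp: img_def image_iff)
    qed
    have ig: "img \<pi> g \<subseteq> edges {0..<n}" by (rule img_sub[OF \<pi> g])
    have injf: "inj_on f X" using bf by (simp add: bij_betw_def)
    show "img \<pi> g \<in> F \<longleftrightarrow> g \<in> F"
    proof
      assume "g \<in> F"
      then have "\<epsilon> ` g \<in> B" by (simp add: F_def)
      then have "f ` (\<epsilon> ` g) \<in> B" using fB by blast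
      then show "img \<pi> g \<in> F" using fimg ig by (simp add: F_def)
    next
      assume "img \<pi> g \<in> F"
      then have "f ` (\<epsilon> ` g) \<in> B" using fimg by (simp add: F_def)
      then obtain b where b: "b \<in> B" "f ` b = f ` (\<epsilon> ` g)" using fB by (metis imageE)
      have bX: "b \<subseteq> X" using b Bsub by (auto simp: subsets_of_card_def)
      have gX: "\<epsilon> ` g \<subseteq> X" using g imE by auto
      have "b = \<epsilon> ` g" by (rule inj_onD[OF inj_on_image_Pow[OF injf] b(2)]) (use bX gX in simp_all)
      then show "g \<in> F" using b g by (simp add: F_def)
    qed
  qed
  have FA: "F = {g. g \<subseteq> edges {0..<n} \<and> card g = 5}"
    by (rule nat_main[OF assms(1) Fsub Finv Fdes assms(2)])
  have "B = subsets_of_card X 5"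
  proof
    show "B \<subseteq> subsets_of_card X 5" by (rule Bsub)
    show "subsets_of_card X 5 \<subseteq> B"
    proof
      fix b assume "b \<in> subsets_of_card X 5"
      then have bX: "b \<subseteq> X" "card b = 5" by (auto simp: subsets_of_card_def)
      obtain g where g: "g \<subseteq> edges {0..<n}" "\<epsilon> ` g = b" "card g = card b" using pre[OF bX(1)] by blast
      then have "g \<in> F" using FA bX by simp
      then show "b \<in> B" using g by (simp add: F_def)
    qed
  qed
  then show False using Bne by simp
qed

end
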